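(* Let $(p_n)$ be a sequence of positive integers with $p_n\to+\infty$, and for each $n$ let $\mathbf{U}_{n1},\ldots,\mathbf{U}_{nn}$ be i.i.d. uniform on $\mathcal{S}^{p_n-1}$. Let $$D^R_{n\ell}=\frac{\sqrt{2p_n}}{n}\sum_{i=1}^{\ell-1}\mathbf{U}_{ni}'\mathbf{U}_{n\ell},\qquad \ell=1,\ldots,n$$ (an empty sum being zero). Then for every $\varepsilon>0$, $\sum_{\ell=1}^n{\rm E}\big[(D^R_{n\ell})^2\,\mathbb{I}[|D^R_{n\ell}|>\varepsilon]\big]\to0$ as $n\to\infty$.
   Context: $\mathcal{S}^{p-1}$ denotes the unit sphere of $\mathbb{R}^p$; $\mathbb{I}[\cdot]$ is the indicator function. *)

theory Defs
  imports "HOL-Probability.Probability"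
begin

text \<open>Euclidean space R^p is represented as extensional functions on the index set
  {..<p}, with Lebesgue measure given by the product of lborel.\<close>

definition euclR :: "nat \<Rightarrow> (nat \<Rightarrow> real) measure" where
  "euclR p = PiM {..<p} (\<lambda>_. lborel)"

definition inprod :: "nat \<Rightarrow> (nat \<Rightarrow> real) \<Rightarrow> (nat \<Rightarrow> real) \<Rightarrow> real" where
  "inprod p u v = (\<Sum>k<p. u k * v k)"

definition enorm :: "nat \<Rightarrow> (nat \<Rightarrow> real) \<Rightarrow> real" where
  "enorm p u = sqrt (inprod p u u)"

definition unit_ball :: "nat \<Rightarrow> (nat \<Rightarrow> real) set" where
  "unit_ball p = {x \<in> space (euclR p). enorm p x \<le> 1}"

definition normalize_vec :: "nat \<Rightarrow> (nat \<Rightarrow> real) \<Rightarrow> (nat \<Rightarrow> real)" where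
  "normalize_vec p x = (\<lambda>i\<in>{..<p}. x i / enorm p x)"

text \<open>Uniform (normalized surface) measure on the unit sphere S^{p-1}, defined as the
  cone measure: the push-forward of the uniform distribution on the unit ball
  under the radial projection x \<mapsto> x/|x|.\<close>

definition sphere_unif :: "nat \<Rightarrow> (nat \<Rightarrow> real) measure" where
  "sphere_unif p = distr (uniform_measure (euclR p) (unit_ball p)) (euclR p) (normalize_vec p)"

end

theory Submission
  imports Defs
begin


abbreviation lbr :: "real measure" where "lbr \<equiv> lborel"
abbreviation Lb :: "nat set \<Rightarrow> (nat \<Rightarrow> real) measure" where "Lb I \<equiv> PiM I (\<lambda>_. lbr)"

lemma psfL: "product_sigma_finite (\<lambda>_::nat. (lborel::real measure))"
  by (simp add: product_sigma_finite_def lborel.sigma_finite_measure_axioms)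

lemma fiber_inv:
  fixes I :: "nat set" and T :: "(nat \<Rightarrow> real) \<Rightarrow> (nat \<Rightarrow> real)"
  assumes fin: "finite I" and iI: "i \<notin> I"
  and Tm: "T \<in> measurable (Lb (insert i I)) (Lb (insert i I))"
  and Tx: "\<And>x t. x \<in> space (Lb I) \<Longrightarrow> T (x(i:=t)) = x(i := h x t)"
  and hm: "\<And>x. x \<in> space (Lb I) \<Longrightarrow> h x \<in> borel_measurable lbr"
  and hd: "\<And>x. x \<in> space (Lb I) \<Longrightarrow> distr lbr lbr (h x) = lborel"
  shows "distr (Lb (insert i I)) (Lb (insert i I)) T = Lb (insert i I)"
proof (rule measure_eqI)
  fix A assume A: "A \<in> sets (distr (Lb (insert i I)) (Lb (insert i I)) T)"
  then have A': "A \<in> sets (Lb (insert i I))" by simp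
  have "emeasure (distr (Lb (insert i I)) (Lb (insert i I)) T) A
     = (\<integral>\<^sup>+ z. indicator A (T z) \<partial>Lb (insert i I))"
    apply (subst nn_integral_indicator[symmetric])
    using A apply simp
    apply (subst nn_integral_distr[OF Tm])
    using A' apply measurable
    done
  also have "\<dots> = (\<integral>\<^sup>+ x. (\<integral>\<^sup>+ t. indicator A (T (x(i:=t))) \<partial>lbr) \<partial>Lb I)"
    using product_sigma_finite.product_nn_integral_insert[OF psfL fin iI, where f="\<lambda>z. indicator A (T z)"] Tm A' by simp
  also have "\<dots> = (\<integral>\<^sup>+ x. (\<integral>\<^sup>+ t. indicator A (x(i:=t)) \<partial>lbr) \<partial>Lb I)"
  proof (rule nn_integral_cong)
    fix x assume x: "x \<in> space (Lb I)"
    have m: "(\<lambda>t. indicator A (x(i:=t)) :: ennreal) \<in> borel_measurable lbr"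
      using measurable_component_update[OF x iI] A' by measurable
    have "(\<integral>\<^sup>+ t. indicator A (T (x(i:=t))) \<partial>lbr) = (\<integral>\<^sup>+ t. indicator A (x(i:=h x t)) \<partial>lbr)"
      using Tx[OF x] by simp
    also have "\<dots> = (\<integral>\<^sup>+ t. indicator A (x(i:=t)) \<partial>distr lbr lbr (h x))"
      by (subst nn_integral_distr) (use hm[OF x] m in auto)
    also have "\<dots> = (\<integral>\<^sup>+ t. indicator A (x(i:=t)) \<partial>lbr)" using hd[OF x] by simp
    finally show "(\<integral>\<^sup>+ t. indicator A (T (x(i:=t))) \<partial>lbr) = (\<integral>\<^sup>+ t. indicator A (x(i:=t)) \<partial>lbr)" .
  qed
  also have "\<dots> = (\<integral>\<^sup>+ z. indicator A z \<partial>Lb (insert i I))"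
    using product_sigma_finite.product_nn_integral_insert[OF psfL fin iI, where f="\<lambda>z. indicator A z"] A' by simp
  also have "\<dots> = emeasure (Lb (insert i I)) A" using A' by simp
  finally show "emeasure (distr (Lb (insert i I)) (Lb (insert i I)) T) A = emeasure (Lb (insert i I)) A" .
qed simp



lemma distr_lbr_plus: "distr lbr lbr (\<lambda>t. t + c) = lbr"
proof -
  have "distr lbr lbr (\<lambda>t. t + c) = distr lbr borel ((+) c)"
    by (simp add: add.commute cong: distr_cong)
  also have "\<dots> = lbr" by (rule lborel_distr_plus)
  finally show ?thesis .
qed

lemma distr_lbr_uminus: "distr lbr lbr (\<lambda>t. - t) = lbr"
proof -
  have "distr lbr lbr (\<lambda>t. - t) = distr lbr borel uminus"
    by (simp cong: distr_cong)
  also have "\<dots> = lbr" by (rule lborel_distr_uminus)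
  finally show ?thesis .
qed

lemma meas_upd:
  assumes "i \<in> I" and [measurable]: "f \<in> borel_measurable (Lb I)"
  shows "(\<lambda>x. x(i := f x)) \<in> measurable (Lb I) (Lb I)"
proof (rule measurable_PiM_single')
  fix k assume k: "k \<in> I"
  show "(\<lambda>x. (x(i := f x)) k) \<in> measurable (Lb I) lbr"
    using k by (cases "k = i") simp_all
next
  show "(\<lambda>x. x(i := f x)) \<in> space (Lb I) \<rightarrow> (\<Pi>\<^sub>E i\<in>I. space lbr)"
    using assms(1) by (auto simp: space_PiM PiE_def extensional_def)
qed

lemma insert_remove_eq: "i \<in> I \<Longrightarrow> insert i (I - {i}) = I" by auto

lemma shear_inv:
  assumes fin: "finite I" and i: "i \<in> I" and j: "j \<in> I" and ij: "i \<noteq> j"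
  shows "distr (Lb I) (Lb I) (\<lambda>x. x(i := x i + a * x j)) = Lb I"
proof -
  have "distr (Lb (insert i (I - {i}))) (Lb (insert i (I - {i}))) (\<lambda>x. x(i := x i + a * x j))
        = Lb (insert i (I - {i}))"
  proof (rule fiber_inv[where h = "\<lambda>x t. t + a * x j"])
    show "(\<lambda>x. x(i := x i + a * x j)) \<in> Lb (insert i (I - {i})) \<rightarrow>\<^sub>M Lb (insert i (I - {i}))"
      by (rule meas_upd) (use i j in auto)
  qed (use fin ij distr_lbr_plus in auto)
  then show ?thesis using i by (simp add: insert_absorb)
qed

lemma flip_inv:
  assumes fin: "finite I" and i: "i \<in> I"
  shows "distr (Lb I) (Lb I) (\<lambda>x. x(i := - x i)) = Lb I"
proof -
  have "distr (Lb (insert i (I - {i}))) (Lb (insert i (I - {i}))) (\<lambda>x. x(i := - x i))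
        = Lb (insert i (I - {i}))"
  proof (rule fiber_inv[where h = "\<lambda>x t. - t"])
    show "(\<lambda>x. x(i := - x i)) \<in> Lb (insert i (I - {i})) \<rightarrow>\<^sub>M Lb (insert i (I - {i}))"
      by (rule meas_upd) (use i in auto)
  qed (use fin distr_lbr_uminus in auto)
  then show ?thesis using i by (simp add: insert_absorb)
qed



definition rot :: "nat \<Rightarrow> nat \<Rightarrow> real \<Rightarrow> real \<Rightarrow> (nat \<Rightarrow> real) \<Rightarrow> (nat \<Rightarrow> real)" where
  "rot i j c s x = x(i := c * x i + s * x j, j := - s * x i + c * x j)"

lemma distr_comp3:
  assumes f: "f \<in> measurable M M" and g: "g \<in> measurable M M" and h: "h \<in> measurable M M"
    and df: "distr M M f = M" and dg: "distr M M g = M" and dh: "distr M M h = M"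
  shows "distr M M (\<lambda>x. f (g (h x))) = M"
proof -
  have "distr M M (\<lambda>x. f (g (h x))) = distr (distr (distr M M h) M g) M f"
    using f g h by (simp add: distr_distr comp_def)
  then show ?thesis using df dg dh by simp
qed

lemma rot_inv:
  assumes fin: "finite I" and i: "i \<in> I" and j: "j \<in> I" and ij: "i \<noteq> j"
    and cs: "c\<^sup>2 + s\<^sup>2 = 1"
  shows "distr (Lb I) (Lb I) (rot i j c s) = Lb I"
proof (cases "s = 0")
  case True
  then have "c = 1 \<or> c = -1" using cs by (simp add: power2_eq_1_iff)
  then show ?thesis
  proof
    assume c: "c = 1"
    have "rot i j c s = (\<lambda>x. x)" using c True by (auto simp: rot_def fun_eq_iff)
    then show ?thesis by (simp add: distr_id)
  next
    assume c: "c = -1"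
    have e: "rot i j c s = (\<lambda>x. (\<lambda>x. x(i := - x i)) ((\<lambda>x. x(j := - x j)) ((\<lambda>x. x) x)))"
      using c True ij by (auto simp: rot_def fun_eq_iff)
    show ?thesis unfolding e
      apply (rule distr_comp3[where f="\<lambda>x. x(i := - x i)" and g="\<lambda>x. x(j := - x j)" and h="\<lambda>x. x"])
      apply (rule meas_upd[OF i], use i in simp)
      apply (rule meas_upd[OF j], use j in simp)
      apply simp
      apply (rule flip_inv[OF fin i])
      apply (rule flip_inv[OF fin j])
      apply (rule distr_id)
      done
  qed
next
  case False
  define \<alpha> where "\<alpha> = (1 - c) / s"
  have e: "rot i j c s = (\<lambda>x. (\<lambda>x. x(i := x i + \<alpha> * x j)) ((\<lambda>x. x(j := x j + (-s) * x i)) ((\<lambda>x. x(i := x i + \<alpha> * x j)) x)))"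
  proof -
    have a1: "1 + \<alpha> * (- s) = c" using False by (simp add: \<alpha>_def field_simps)
    have a2: "\<alpha> + \<alpha> * (1 + \<alpha> * (- s)) = s"
    proof -
      have "\<alpha> + \<alpha> * (1 + \<alpha> * (- s)) = \<alpha> + \<alpha> * c" by (simp only: a1)
      also have "\<dots> = \<alpha> * (1 + c)" by (simp add: algebra_simps)
      also have "\<dots> = (1 - c\<^sup>2) / s" by (simp add: \<alpha>_def power2_eq_square algebra_simps)
      also have "\<dots> = s" using cs False by (simp add: power2_eq_square field_simps)
      finally show ?thesis .
    qed
    show ?thesis
    proof (rule ext)
      fix x :: "nat \<Rightarrow> real"
      show "rot i j c s x = (\<lambda>x. x(i := x i + \<alpha> * x j)) ((\<lambda>x. x(j := x j + (-s) * x i)) ((\<lambda>x. x(i := x i + \<alpha> * x j)) x))"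
      proof -
        have c_eq: "c = 1 - \<alpha> * s" using a1 by simp
        have a3: "s + \<alpha> * (\<alpha> * s) = \<alpha> * 2" using a2 by (simp add: algebra_simps)
        have t1: "(s + \<alpha> * (\<alpha> * s)) * x j = (\<alpha> * 2) * x j" using a3 by simp
        show ?thesis using ij t1 unfolding rot_def c_eq
          by (auto simp: fun_eq_iff algebra_simps)
      qed
    qed
  qed
  show ?thesis unfolding e
    apply (rule distr_comp3[where f="\<lambda>x. x(i := x i + \<alpha> * x j)" and g="\<lambda>x. x(j := x j + (-s) * x i)" and h="\<lambda>x. x(i := x i + \<alpha> * x j)"])
    apply (rule meas_upd[OF i], use i j in simp)
    apply (rule meas_upd[OF j], use i j in simp)
    apply (rule meas_upd[OF i], use i j in simp)
    apply (rule shear_inv[OF fin i j ij])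
    apply (rule shear_inv[OF fin j i ij[symmetric]])
    apply (rule shear_inv[OF fin i j ij])
    done
qed



lemma euclR_Lb: "euclR P = Lb {..<P}" by (simp add: euclR_def)

lemma comp_meas[measurable]:
  assumes "f \<in> measurable M (euclR P)" "k < P"
  shows "(\<lambda>x. f x k) \<in> borel_measurable M"
proof -
  have "(\<lambda>y. y k) \<in> borel_measurable (euclR P)" using assms(2) unfolding euclR_def by simp
  from measurable_comp[OF assms(1) this] show ?thesis by (simp add: comp_def)
qed

lemma inprod_meas[measurable]:
  assumes "f \<in> measurable M (euclR P)" "g \<in> measurable M (euclR P)"
  shows "(\<lambda>x. inprod P (f x) (g x)) \<in> borel_measurable M"
  unfolding inprod_def
  by (rule borel_measurable_sum, rule borel_measurable_times; use comp_meas assms in auto)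

lemma enorm_meas[measurable]:
  assumes "f \<in> measurable M (euclR P)"
  shows "(\<lambda>x. enorm P (f x)) \<in> borel_measurable M"
  unfolding enorm_def using assms by measurable

lemma normalize_meas[measurable]: "normalize_vec P \<in> measurable (euclR P) (euclR P)"
  unfolding normalize_vec_def
  apply (subst (2) euclR_def)
  apply (rule measurable_restrict)
  apply (simp only: measurable_lborel1)
  apply (rule borel_measurable_divide)
  apply (rule comp_meas[where P=P], simp, simp)
  apply (rule enorm_meas, simp)
  done

lemma unit_ball_sets[measurable]: "unit_ball P \<in> sets (euclR P)"
proof -
  have "unit_ball P = {x \<in> space (euclR P). enorm P x \<le> 1}" by (simp add: unit_ball_def)
  also have "\<dots> \<in> sets (euclR P)" by measurable
  finally show ?thesis .
qed



lemma space_euclR: "space (euclR P) = (\<Pi>\<^sub>E k\<in>{..<P}. UNIV)"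
  by (simp add: euclR_def space_PiM)

lemma inprod_nonneg: "0 \<le> inprod P x x"
  unfolding inprod_def by (auto intro: sum_nonneg)

lemma enorm_sq: "(enorm P x)\<^sup>2 = inprod P x x"
  unfolding enorm_def using inprod_nonneg[of P x] by simp

lemma enorm_nonneg: "0 \<le> enorm P x" unfolding enorm_def using inprod_nonneg[of P x] by simp

lemma enorm_le1: "enorm P x \<le> 1 \<longleftrightarrow> inprod P x x \<le> 1"
  unfolding enorm_def by simp

lemma coord_sq_le: "k < P \<Longrightarrow> (x k)\<^sup>2 \<le> inprod P x x"
  unfolding inprod_def power2_eq_square
  by (rule member_le_sum) auto

lemma coord_le1: "k < P \<Longrightarrow> enorm P x \<le> 1 \<Longrightarrow> \<bar>x k\<bar> \<le> 1"
proof -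
  assume "k < P" "enorm P x \<le> 1"
  then have "(x k)\<^sup>2 \<le> 1" using coord_sq_le[of k P x] enorm_le1[of P x] by linarith
  then show ?thesis by (simp add: abs_square_le_1)
qed

lemma psfL_emeasure:
  "(\<And>k. k \<in> I \<Longrightarrow> A k \<in> sets lbr) \<Longrightarrow> finite I \<Longrightarrow> emeasure (Lb I) (Pi\<^sub>E I A) = (\<Prod>k\<in>I. emeasure lbr (A k))"
  by (rule product_sigma_finite.emeasure_PiM[OF psfL])

lemma ball_fin: "emeasure (euclR P) (unit_ball P) < \<infinity>"
proof -
  have sub: "unit_ball P \<subseteq> (\<Pi>\<^sub>E k\<in>{..<P}. {-1..1})"
    by (auto simp: unit_ball_def space_euclR PiE_def Pi_def abs_le_iff dest!: coord_le1)
  have "emeasure (euclR P) (unit_ball P) \<le> emeasure (euclR P) (\<Pi>\<^sub>E k\<in>{..<P}. {-1..1::real})"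
    by (rule emeasure_mono[OF sub]) (simp add: euclR_def)
  also have "\<dots> = (\<Prod>k\<in>{..<P}. emeasure lbr {-1..1})"
    unfolding euclR_Lb by (rule psfL_emeasure) auto
  also have "\<dots> = ennreal 2 ^ P" by simp
  also have "\<dots> < \<infinity>" by (simp add: power_less_top_ennreal)
  finally show ?thesis .
qed



lemma ball_pos:
  assumes P: "P > 0"
  shows "emeasure (euclR P) (unit_ball P) \<noteq> 0"
proof -
  have sub: "(\<Pi>\<^sub>E k\<in>{..<P}. {-1/P..1/P}) \<subseteq> unit_ball P"
  proof
    fix x assume x: "x \<in> (\<Pi>\<^sub>E k\<in>{..<P}. {-1/real P..1/P})"
    have "inprod P x x \<le> (\<Sum>k<P. (1/real P)\<^sup>2)"
      unfolding inprod_def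
    proof (rule sum_mono)
      fix k assume "k \<in> {..<P}"
      then have "\<bar>x k\<bar> \<le> 1/P" using x by (auto simp: PiE_def Pi_def abs_le_iff)
      then show "x k * x k \<le> (1/real P)\<^sup>2"
        by (metis abs_ge_zero power2_eq_square power_mono power2_abs)
    qed
    also have "\<dots> = 1 / P" using P by (simp add: power2_eq_square)
    also have "\<dots> \<le> 1" using P by simp
    finally have "enorm P x \<le> 1" by (simp add: enorm_le1)
    then show "x \<in> unit_ball P" using x
      by (auto simp: unit_ball_def space_euclR PiE_def)
  qed
  have "0 < (\<Prod>k\<in>{..<P}. emeasure lbr {-1/real P..1/P})"
    using P by (simp add: ennreal_power)
  also have "\<dots> = emeasure (euclR P) (\<Pi>\<^sub>E k\<in>{..<P}. {-1/P..1/P})"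
    unfolding euclR_Lb by (rule psfL_emeasure[symmetric]) auto
  also have "\<dots> \<le> emeasure (euclR P) (unit_ball P)"
    by (rule emeasure_mono[OF sub]) simp
  finally show ?thesis by simp
qed



lemma sets_unif[simp]: "sets (uniform_measure (euclR P) (unit_ball P)) = sets (euclR P)"
  by (simp add: uniform_measure_def)

lemma space_unif[simp]: "space (uniform_measure (euclR P) (unit_ball P)) = space (euclR P)"
  by (simp add: uniform_measure_def)

lemma sphere_inv:
  assumes Gm[measurable]: "G \<in> measurable (euclR P) (euclR P)"
    and GL: "distr (euclR P) (euclR P) G = euclR P"
    and Gs: "\<And>x. x \<in> space (euclR P) \<Longrightarrow> enorm P (G x) = enorm P x"
    and Gn: "\<And>x. x \<in> space (euclR P) \<Longrightarrow> G (normalize_vec P x) = normalize_vec P (G x)"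
  shows "distr (sphere_unif P) (euclR P) G = sphere_unif P"
proof -
  define U where "U = uniform_measure (euclR P) (unit_ball P)"
  have sU[simp]: "sets U = sets (euclR P)" "space U = space (euclR P)" by (simp_all add: U_def)
  have GU: "G \<in> measurable U (euclR P)" using measurable_cong_sets[OF sU(1) refl, of "euclR P"] Gm by simp
  have nU: "normalize_vec P \<in> measurable U (euclR P)" using measurable_cong_sets[OF sU(1) refl, of "euclR P"] normalize_meas by simp
  have pre: "\<And>A. G -` (unit_ball P \<inter> A) \<inter> space (euclR P) = unit_ball P \<inter> (G -` A \<inter> space (euclR P))"
  proof -
    fix A
    have "\<And>x. x \<in> space (euclR P) \<Longrightarrow> G x \<in> space (euclR P)"
      using measurable_space[OF Gm] by blast
    then show "G -` (unit_ball P \<inter> A) \<inter> space (euclR P) = unit_ball P \<inter> (G -` A \<inter> space (euclR P))"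
      using Gs by (auto simp: unit_ball_def)
  qed
  have dU: "distr U (euclR P) G = U"
  proof (rule measure_eqI)
    fix A assume A: "A \<in> sets (distr U (euclR P) G)"
    then have A': "A \<in> sets (euclR P)" by simp
    have "emeasure (distr U (euclR P) G) A = emeasure U (G -` A \<inter> space (euclR P))"
      using A' GU by (simp add: emeasure_distr)
    also have "\<dots> = emeasure (euclR P) (unit_ball P \<inter> (G -` A \<inter> space (euclR P))) / emeasure (euclR P) (unit_ball P)"
      unfolding U_def using A' by (subst emeasure_uniform_measure) auto
    also have "\<dots> = emeasure (euclR P) (G -` (unit_ball P \<inter> A) \<inter> space (euclR P)) / emeasure (euclR P) (unit_ball P)"
      by (simp only: pre)
    also have "emeasure (euclR P) (G -` (unit_ball P \<inter> A) \<inter> space (euclR P)) = emeasure (distr (euclR P) (euclR P) G) (unit_ball P \<inter> A)"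
      using A' by (simp add: emeasure_distr)
    also have "\<dots> = emeasure (euclR P) (unit_ball P \<inter> A)" by (simp add: GL)
    also have "emeasure (euclR P) (unit_ball P \<inter> A) / emeasure (euclR P) (unit_ball P) = emeasure U A"
      unfolding U_def using A' by (subst emeasure_uniform_measure) auto
    finally show "emeasure (distr U (euclR P) G) A = emeasure U A" .
  qed simp
  have "distr (sphere_unif P) (euclR P) G = distr (distr U (euclR P) (normalize_vec P)) (euclR P) G"
    by (simp add: sphere_unif_def U_def)
  also have "\<dots> = distr U (euclR P) (G \<circ> normalize_vec P)"
    by (rule distr_distr[OF Gm nU])
  also have "\<dots> = distr U (euclR P) (normalize_vec P \<circ> G)"
    by (rule distr_cong) (auto simp: Gn)
  also have "\<dots> = distr (distr U (euclR P) G) (euclR P) (normalize_vec P)"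
    by (rule distr_distr[symmetric, OF normalize_meas GU])
  also have "\<dots> = sphere_unif P" unfolding dU by (simp add: sphere_unif_def U_def)
  finally show ?thesis .
qed



lemma comp_Lb[measurable]: "k < P \<Longrightarrow> (\<lambda>x. x k) \<in> borel_measurable (Lb {..<P})"
  using measurable_component_singleton[of k "{..<P}" "\<lambda>_. lbr"] by simp

lemma rot_meas:
  assumes "i < P" "j < P"
  shows "rot i j c s \<in> measurable (euclR P) (euclR P)"
  unfolding euclR_Lb
proof (rule measurable_PiM_single')
  fix k assume k: "k \<in> {..<P}"
  show "(\<lambda>x. rot i j c s x k) \<in> measurable (Lb {..<P}) lbr"
    using k assms unfolding rot_def by (cases "k = j"; cases "k = i")
      (auto intro!: borel_measurable_add borel_measurable_diff borel_measurable_times borel_measurable_const comp_Lb)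
next
  show "(\<lambda>x. rot i j c s x) \<in> space (Lb {..<P}) \<rightarrow> (\<Pi>\<^sub>E i\<in>{..<P}. space lbr)"
    using assms by (auto simp: space_PiM PiE_def extensional_def rot_def)
qed

lemma rot_distr:
  assumes "i < P" "j < P" "i \<noteq> j" "c\<^sup>2 + s\<^sup>2 = 1"
  shows "distr (euclR P) (euclR P) (rot i j c s) = euclR P"
  unfolding euclR_Lb by (rule rot_inv) (use assms in auto)

lemma sum_two:
  fixes P :: nat
  assumes "i < P" "j < P" "i \<noteq> j"
  shows "(\<Sum>k<P. f k) = f i + f j + (\<Sum>k\<in>{..<P} - {i} - {j}. f k)"
proof -
  have "(\<Sum>k<P. f k) = f i + (\<Sum>k\<in>{..<P} - {i}. f k)"
    using assms by (subst sum.remove[of "{..<P}" i]) auto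
  also have "(\<Sum>k\<in>{..<P} - {i}. f k) = f j + (\<Sum>k\<in>{..<P} - {i} - {j}. f k)"
    using assms by (subst sum.remove[of "{..<P} - {i}" j]) auto
  finally show ?thesis by (simp add: add.assoc)
qed

lemma rot_inprod:
  assumes "i < P" "j < P" "i \<noteq> j" "c\<^sup>2 + s\<^sup>2 = 1"
  shows "inprod P (rot i j c s x) (rot i j c s x) = inprod P x x"
proof -
  have "inprod P (rot i j c s x) (rot i j c s x) =
     (c * x i + s * x j) * (c * x i + s * x j) + (- s * x i + c * x j) * (- s * x i + c * x j)
     + (\<Sum>k\<in>{..<P} - {i} - {j}. x k * x k)"
    unfolding inprod_def using assms by (subst sum_two[of i P j]) (auto simp: rot_def intro!: sum.cong)
  also have "(c * x i + s * x j) * (c * x i + s * x j) + (- s * x i + c * x j) * (- s * x i + c * x j)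
      = (c\<^sup>2 + s\<^sup>2) * (x i * x i + x j * x j)"
    by (simp add: power2_eq_square algebra_simps)
  also have "\<dots> = x i * x i + x j * x j" using assms by simp
  finally show ?thesis unfolding inprod_def using assms by (subst (2) sum_two[of i P j]) auto
qed

lemma rot_enorm:
  assumes "i < P" "j < P" "i \<noteq> j" "c\<^sup>2 + s\<^sup>2 = 1"
  shows "enorm P (rot i j c s x) = enorm P x"
  unfolding enorm_def using rot_inprod[OF assms] by simp

lemma rot_normalize:
  assumes "i < P" "j < P" "i \<noteq> j" "c\<^sup>2 + s\<^sup>2 = 1"
  shows "rot i j c s (normalize_vec P x) = normalize_vec P (rot i j c s x)"
  using assms rot_enorm[OF assms, of x]
  by (auto simp: rot_def normalize_vec_def fun_eq_iff add_divide_distrib diff_divide_distrib)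

lemma rot_sphere:
  assumes "i < P" "j < P" "i \<noteq> j" "c\<^sup>2 + s\<^sup>2 = 1"
  shows "distr (sphere_unif P) (euclR P) (rot i j c s) = sphere_unif P"
  by (rule sphere_inv[OF rot_meas rot_distr rot_enorm rot_normalize]) (use assms in auto)

definition flip0 :: "(nat \<Rightarrow> real) \<Rightarrow> (nat \<Rightarrow> real)" where
  "flip0 x = x(0 := - x 0)"

lemma flip0_sphere:
  assumes P: "0 < P"
  shows "distr (sphere_unif P) (euclR P) flip0 = sphere_unif P"
proof (rule sphere_inv)
  show fm: "flip0 \<in> measurable (euclR P) (euclR P)"
    unfolding euclR_Lb flip0_def by (rule meas_upd) (use P comp_Lb in auto)
  show "distr (euclR P) (euclR P) flip0 = euclR P"
    unfolding euclR_Lb flip0_def by (rule flip_inv) (use P in simp_all)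
  have ip: "inprod P (flip0 x) (flip0 x) = inprod P x x" for x
  proof -
    have "inprod P (flip0 x) (flip0 x) = (- x 0) * (- x 0) + (\<Sum>k\<in>{..<P} - {0}. x k * x k)"
      unfolding inprod_def flip0_def using P by (subst sum.remove[of _ 0]) (auto intro!: sum.cong)
    also have "\<dots> = inprod P x x"
      unfolding inprod_def using P by (subst (2) sum.remove[of _ 0]) auto
    finally show ?thesis .
  qed
  show en: "enorm P (flip0 x) = enorm P x" for x unfolding enorm_def ip ..
  show "flip0 (normalize_vec P x) = normalize_vec P (flip0 x)" for x
    using P en[of x] by (auto simp: flip0_def normalize_vec_def fun_eq_iff)
qed



lemma sets_sphere[simp]: "sets (sphere_unif P) = sets (euclR P)"
  by (simp add: sphere_unif_def)

lemma space_sphere[simp]: "space (sphere_unif P) = space (euclR P)"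
  by (simp add: sphere_unif_def)

lemma meas_sphere: "G \<in> measurable (euclR P) N \<Longrightarrow> G \<in> measurable (sphere_unif P) N"
  using measurable_cong_sets[OF sets_sphere[of P] refl, of N] by simp

lemma inprod_const_meas[measurable]: "(\<lambda>x. inprod P x w) \<in> borel_measurable (euclR P)"
  unfolding inprod_def euclR_Lb
  by (auto intro!: borel_measurable_sum borel_measurable_times borel_measurable_const comp_Lb)

lemma comp0_meas[measurable]: "0 < P \<Longrightarrow> (\<lambda>x. x 0) \<in> borel_measurable (euclR P)"
  unfolding euclR_Lb by (rule comp_Lb)

lemma flip0_meas: "0 < P \<Longrightarrow> flip0 \<in> measurable (euclR P) (euclR P)"
  unfolding euclR_Lb flip0_def by (rule meas_upd) (auto intro: comp_Lb)

lemma sphere_integral_inv: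
  assumes G: "G \<in> measurable (euclR P) (euclR P)" and d: "distr (sphere_unif P) (euclR P) G = sphere_unif P"
    and h: "h \<in> borel_measurable (euclR P)"
  shows "(\<integral>x. h (G x) \<partial>sphere_unif P) = (\<integral>x. (h x :: real) \<partial>sphere_unif P)"
proof -
  have "(\<integral>x. h x \<partial>sphere_unif P) = (\<integral>x. h x \<partial>distr (sphere_unif P) (euclR P) G)" by (simp add: d)
  also have "\<dots> = (\<integral>x. h (G x) \<partial>sphere_unif P)"
    by (rule integral_distr[OF meas_sphere[OF G] h])
  finally show ?thesis by simp
qed

lemma key_lemma:
  fixes f :: "real \<Rightarrow> real"
  assumes P: "0 < P" and f[measurable]: "f \<in> borel_measurable borel"
  shows "(\<integral>x. f (inprod P x v) \<partial>sphere_unif P) = (\<integral>x. f (enorm P v * x 0) \<partial>sphere_unif P)"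
proof -
  have Q: "\<And>v. (\<forall>k. m < k \<longrightarrow> k < P \<longrightarrow> v k = 0) \<Longrightarrow>
     (\<integral>x. f (inprod P x v) \<partial>sphere_unif P) = (\<integral>x. f (enorm P v * x 0) \<partial>sphere_unif P)"
    if "m < P" for m
  using that proof (induction m)
    case 0
    fix v :: "nat \<Rightarrow> real"
    assume sv: "\<forall>k. 0 < k \<longrightarrow> k < P \<longrightarrow> v k = 0"
    have ipx: "inprod P x v = x 0 * v 0" for x
    proof -
      have "inprod P x v = x 0 * v 0 + (\<Sum>k\<in>{..<P} - {0}. x k * v k)"
        unfolding inprod_def using P by (subst sum.remove[of _ 0]) auto
      also have "(\<Sum>k\<in>{..<P} - {0}. x k * v k) = 0" using sv by (auto intro!: sum.neutral)
      finally show ?thesis by simp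
    qed
    have env: "enorm P v = \<bar>v 0\<bar>"
      unfolding enorm_def ipx by (simp add: real_sqrt_mult_self)
    show "(\<integral>x. f (inprod P x v) \<partial>sphere_unif P) = (\<integral>x. f (enorm P v * x 0) \<partial>sphere_unif P)"
    proof (cases "v 0 \<ge> 0")
      case True
      then show ?thesis unfolding ipx env by (simp add: mult.commute)
    next
      case False
      have "(\<integral>x. f (enorm P v * x 0) \<partial>sphere_unif P) = (\<integral>x. f (enorm P v * flip0 x 0) \<partial>sphere_unif P)"
      proof (rule sphere_integral_inv[symmetric, OF flip0_meas[OF P] flip0_sphere[OF P]])
        show "(\<lambda>x. f (enorm P v * x 0)) \<in> borel_measurable (euclR P)"
          using comp0_meas[OF P] by measurable
      qed
      also have "\<dots> = (\<integral>x. f (inprod P x v) \<partial>sphere_unif P)"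
        unfolding ipx env flip0_def using False by (simp add: mult.commute)
      finally show ?thesis by simp
    qed
  next
    case (Suc m)
    fix v :: "nat \<Rightarrow> real"
    assume sv: "\<forall>k. Suc m < k \<longrightarrow> k < P \<longrightarrow> v k = 0"
    have mP: "m < P" "Suc m < P" using Suc.prems by auto
    define a where "a = v 0"
    define b where "b = v (Suc m)"
    define r where "r = sqrt (a\<^sup>2 + b\<^sup>2)"
    show "(\<integral>x. f (inprod P x v) \<partial>sphere_unif P) = (\<integral>x. f (enorm P v * x 0) \<partial>sphere_unif P)"
    proof (cases "r = 0")
      case True
      then have "a = 0" "b = 0" unfolding r_def by (simp_all add: add_nonneg_eq_0_iff)
      then have "\<forall>k. m < k \<longrightarrow> k < P \<longrightarrow> v k = 0"
        using sv unfolding b_def by (metis Suc_lessI)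
      then show ?thesis using Suc.IH mP(1) by blast
    next
      case False
      have rr: "r * r = a\<^sup>2 + b\<^sup>2" unfolding r_def by (simp add: power2_eq_square[symmetric])
      define c where "c = a / r"
      define s where "s = b / r"
      have cs: "c\<^sup>2 + s\<^sup>2 = 1"
      proof -
        have "c\<^sup>2 + s\<^sup>2 = (a\<^sup>2 + b\<^sup>2) / (r * r)"
          unfolding c_def s_def by (simp add: power_divide add_divide_distrib power2_eq_square)
        moreover have "r * r \<noteq> 0" using False by simp
        ultimately show ?thesis using rr by simp
      qed
      define w where "w = v(0 := r, Suc m := 0)"
      have ne: "0 \<noteq> Suc m" by simp
      have ip: "inprod P x v = inprod P (rot 0 (Suc m) c s x) w" for x
      proof -
        have "inprod P x v = x 0 * a + x (Suc m) * b + (\<Sum>k\<in>{..<P} - {0} - {Suc m}. x k * v k)"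
          unfolding inprod_def a_def b_def using mP by (subst sum_two[of 0 P "Suc m"]) auto
        also have "\<dots> = (c * x 0 + s * x (Suc m)) * r + (- s * x 0 + c * x (Suc m)) * 0 + (\<Sum>k\<in>{..<P} - {0} - {Suc m}. x k * v k)"
          using False unfolding c_def s_def by (simp add: algebra_simps)
        also have "\<dots> = inprod P (rot 0 (Suc m) c s x) w"
          unfolding inprod_def using mP by (subst sum_two[of 0 P "Suc m"]) (auto simp: rot_def w_def intro!: sum.cong)
        finally show ?thesis .
      qed
      have enw: "enorm P w = enorm P v"
      proof -
        have "inprod P w w = r * r + 0 * 0 + (\<Sum>k\<in>{..<P} - {0} - {Suc m}. v k * v k)"
          unfolding inprod_def using mP by (subst sum_two[of 0 P "Suc m"]) (auto simp: w_def intro!: sum.cong)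
        also have "\<dots> = inprod P v v"
          unfolding inprod_def rr a_def b_def using mP by (subst sum_two[of 0 P "Suc m"]) (auto simp: power2_eq_square)
        finally show ?thesis unfolding enorm_def by simp
      qed
      have sw: "\<forall>k. m < k \<longrightarrow> k < P \<longrightarrow> w k = 0"
        using sv unfolding w_def by (auto simp: Suc_lessI)
      have "(\<integral>x. f (inprod P x v) \<partial>sphere_unif P) = (\<integral>x. f (inprod P (rot 0 (Suc m) c s x) w) \<partial>sphere_unif P)"
        by (simp add: ip)
      also have "\<dots> = (\<integral>x. f (inprod P x w) \<partial>sphere_unif P)"
        by (rule sphere_integral_inv[OF rot_meas rot_sphere]) (use mP cs in auto)
      also have "\<dots> = (\<integral>x. f (enorm P w * x 0) \<partial>sphere_unif P)"
        by (rule Suc.IH[OF sw mP(1)])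
      finally show ?thesis by (simp add: enw)
    qed
  qed
  have "\<forall>k. P - 1 < k \<longrightarrow> k < P \<longrightarrow> v k = 0" by auto
  then show ?thesis using Q[of "P - 1"] P by simp
qed



lemma meas_unif: "G \<in> measurable (euclR P) N \<Longrightarrow> G \<in> measurable (uniform_measure (euclR P) (unit_ball P)) N"
  using measurable_cong_sets[OF sets_unif[of P] refl, of N] by simp

lemma sphere_prob: assumes P: "0 < P" shows "prob_space (sphere_unif P)"
  unfolding sphere_unif_def
  by (rule prob_space.prob_space_distr[OF prob_space_uniform_measure[OF ball_pos[OF P] ball_fin[THEN less_imp_neq]]])
     (rule meas_unif[OF normalize_meas])

lemma AE_L_nz:
  assumes P: "0 < P"
  shows "AE y in euclR P. y 0 \<noteq> 0"
proof (rule AE_I')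
  let ?N = "(\<Pi>\<^sub>E k\<in>{..<P}. if k = 0 then {0} else (UNIV::real set))"
  have "emeasure (euclR P) ?N = (\<Prod>k\<in>{..<P}. emeasure lbr (if k = 0 then {0} else UNIV))"
    unfolding euclR_Lb by (rule psfL_emeasure) auto
  also have "\<dots> = 0" using P by (intro prod_zero) (auto intro!: bexI[of _ 0])
  finally show "?N \<in> null_sets (euclR P)" by (auto simp: null_sets_def euclR_Lb)
  show "{x \<in> space (euclR P). \<not> x 0 \<noteq> 0} \<subseteq> ?N"
    by (auto simp: space_euclR PiE_def Pi_def)
qed

lemma normalize_inprod:
  assumes "inprod P y y \<noteq> 0"
  shows "inprod P (normalize_vec P y) (normalize_vec P y) = 1"
proof -
  have "inprod P (normalize_vec P y) (normalize_vec P y) = (\<Sum>k<P. y k * y k) / (enorm P y)\<^sup>2"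
    unfolding inprod_def normalize_vec_def by (simp add: sum_divide_distrib power2_eq_square)
  also have "\<dots> = 1" using assms by (simp add: enorm_sq inprod_def)
  finally show ?thesis .
qed

lemma AE_sphere:
  assumes P: "0 < P"
  shows "AE x in sphere_unif P. inprod P x x = 1"
proof -
  have nU: "normalize_vec P \<in> measurable (uniform_measure (euclR P) (unit_ball P)) (euclR P)"
    by (rule meas_unif[OF normalize_meas])
  have "AE y in uniform_measure (euclR P) (unit_ball P). inprod P (normalize_vec P y) (normalize_vec P y) = 1"
  proof (rule AE_uniform_measureI)
    show "AE y in euclR P. y \<in> unit_ball P \<longrightarrow> inprod P (normalize_vec P y) (normalize_vec P y) = 1"
      using AE_L_nz[OF P]
    proof eventually_elim
      case (elim y)
      have "(y 0)\<^sup>2 \<le> inprod P y y" by (rule coord_sq_le[OF P])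
      moreover have "(y 0)\<^sup>2 > 0" using elim by simp
      ultimately have "inprod P y y \<noteq> 0" by linarith
      then show ?case by (simp add: normalize_inprod)
    qed
  qed simp
  then show ?thesis
    unfolding sphere_unif_def by (subst AE_distr_iff[OF nU]) simp_all
qed



definition ev :: "nat \<Rightarrow> nat \<Rightarrow> real" where "ev k = (\<lambda>j. if j = k then 1 else 0)"

lemma inprod_ev: "k < P \<Longrightarrow> inprod P x (ev k) = x k"
proof -
  assume k: "k < P"
  have "inprod P x (ev k) = (\<Sum>j\<in>{..<P}. if j = k then x j else 0)"
    unfolding inprod_def ev_def by (rule sum.cong) auto
  also have "\<dots> = x k" using k by (simp add: sum.delta')
  finally show ?thesis .
qed

lemma enorm_ev: "k < P \<Longrightarrow> enorm P (ev k) = 1"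
proof -
  assume k: "k < P"
  have "inprod P (ev k) (ev k) = 1" using inprod_ev[OF k, of "ev k"] by (simp add: ev_def)
  then show ?thesis unfolding enorm_def by simp
qed

lemma inprod_add2: "inprod P x (\<lambda>i. u i + w i) = inprod P x u + inprod P x w"
  unfolding inprod_def by (simp add: distrib_left sum.distrib)

lemma inprod_diff2: "inprod P x (\<lambda>i. u i - w i) = inprod P x u - inprod P x w"
  unfolding inprod_def by (simp add: right_diff_distrib sum_subtractf)

lemma inprod_neg2: "inprod P x (\<lambda>i. - u i) = - inprod P x u"
  unfolding inprod_def by (simp add: sum_negf)

lemma inprod_sym: "inprod P x y = inprod P y x"
  unfolding inprod_def by (simp add: mult.commute)

lemma enorm_neg: "enorm P (\<lambda>i. - u i) = enorm P u"
  unfolding enorm_def inprod_def by simp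

lemma AE_sphere_coord:
  assumes P: "0 < P"
  shows "AE x in sphere_unif P. \<forall>k<P. \<bar>x k\<bar> \<le> 1"
  using AE_sphere[OF P]
proof eventually_elim
  case (elim x)
  then have "enorm P x \<le> 1" by (simp add: enorm_le1)
  then show ?case using coord_le1 by blast
qed

lemma sphere_integrable:
  assumes P: "0 < P" and g: "g \<in> borel_measurable (euclR P)"
    and B: "\<And>x. (\<forall>k<P. \<bar>x k\<bar> \<le> 1) \<Longrightarrow> \<bar>g x\<bar> \<le> B"
  shows "integrable (sphere_unif P) (g :: _ \<Rightarrow> real)"
proof -
  interpret S: prob_space "sphere_unif P" by (rule sphere_prob[OF P])
  show ?thesis
  proof (rule S.integrable_const_bound)
    show "AE x in sphere_unif P. norm (g x) \<le> B"
      using AE_sphere_coord[OF P] by eventually_elim (simp add: B)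
    show "g \<in> borel_measurable (sphere_unif P)" by (rule meas_sphere[OF g])
  qed
qed

lemma sphere_odd:
  fixes f :: "real \<Rightarrow> real"
  assumes P: "0 < P" and f: "f \<in> borel_measurable borel" and odd: "\<And>t. f (- t) = - f t"
  shows "(\<integral>x. f (inprod P x v) \<partial>sphere_unif P) = 0"
proof -
  have "(\<integral>x. f (inprod P x v) \<partial>sphere_unif P) = (\<integral>x. f (enorm P v * x 0) \<partial>sphere_unif P)"
    by (rule key_lemma[OF P f])
  also have "\<dots> = (\<integral>x. f (inprod P x (\<lambda>i. - v i)) \<partial>sphere_unif P)"
    by (rule key_lemma[OF P f, symmetric, of "\<lambda>i. - v i", unfolded enorm_neg])
  also have "\<dots> = - (\<integral>x. f (inprod P x v) \<partial>sphere_unif P)"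
    by (simp add: inprod_neg2 odd)
  finally show ?thesis by simp
qed

lemma sphere_m1: "0 < P \<Longrightarrow> (\<integral>x. inprod P x v \<partial>sphere_unif P) = 0"
  using sphere_odd[of P "\<lambda>t. t" v] by simp

lemma sphere_m3: "0 < P \<Longrightarrow> (\<integral>x. (inprod P x v) ^ 3 \<partial>sphere_unif P) = 0"
  using sphere_odd[of P "\<lambda>t. t ^ 3" v] by simp

lemma sphere_pow:
  assumes P: "0 < P"
  shows "(\<integral>x. (inprod P x v) ^ n \<partial>sphere_unif P) = (enorm P v) ^ n * (\<integral>x. (x 0) ^ n \<partial>sphere_unif P)"
proof -
  have "(\<integral>x. (inprod P x v) ^ n \<partial>sphere_unif P) = (\<integral>x. (enorm P v * x 0) ^ n \<partial>sphere_unif P)"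
    by (rule key_lemma[OF P, where f = "\<lambda>t. t ^ n"]) simp
  also have "\<dots> = (enorm P v) ^ n * (\<integral>x. (x 0) ^ n \<partial>sphere_unif P)"
    by (simp add: power_mult_distrib)
  finally show ?thesis .
qed



lemma compE: "k < P \<Longrightarrow> (\<lambda>x. x k) \<in> borel_measurable (euclR P)"
  unfolding euclR_Lb by (rule comp_Lb)

lemma abs_le1_mult: "\<bar>a::real\<bar> \<le> 1 \<Longrightarrow> \<bar>b\<bar> \<le> 1 \<Longrightarrow> \<bar>a * b\<bar> \<le> 1"
  by (simp add: abs_mult mult_le_one)

lemma sq_le1: "\<bar>a::real\<bar> \<le> 1 \<Longrightarrow> a * a \<le> 1"
  using abs_le1_mult[of a a] by simp

lemma inprod_self_meas: "(\<lambda>x. inprod P x x) \<in> borel_measurable (euclR P)"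
  using inprod_meas[of "\<lambda>x. x" "euclR P" P "\<lambda>x. x"] by simp

lemma sphere_int1:
  assumes P: "0 < P"
  shows "(\<integral>x. inprod P x x \<partial>sphere_unif P) = 1"
proof -
  interpret S: prob_space "sphere_unif P" by (rule sphere_prob[OF P])
  have "(\<integral>x. inprod P x x \<partial>sphere_unif P) = (\<integral>x. 1 \<partial>sphere_unif P)"
    by (rule integral_cong_AE[OF meas_sphere[OF inprod_self_meas] _ AE_sphere[OF P]]) simp
  then show ?thesis using S.prob_space by simp
qed

lemma sphere_s:
  assumes P: "0 < P"
  shows "(\<integral>x. (x 0)\<^sup>2 \<partial>sphere_unif P) = 1 / P"
proof -
  define s where "s = (\<integral>x. (x 0)\<^sup>2 \<partial>sphere_unif P)"
  have sk: "(\<integral>x. x k * x k \<partial>sphere_unif P) = s" if k: "k < P" for k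
    using sphere_pow[OF P, of "ev k" 2] unfolding s_def
    by (simp add: inprod_ev[OF k] enorm_ev[OF k] power2_eq_square)
  have int: "integrable (sphere_unif P) (\<lambda>x. x k * x k)" if k: "k < P" for k
    by (rule sphere_integrable[OF P, where B=1]) (use k compE in \<open>auto intro!: sq_le1\<close>)
  have "1 = (\<integral>x. inprod P x x \<partial>sphere_unif P)" using sphere_int1[OF P] by simp
  also have "\<dots> = (\<Sum>k<P. (\<integral>x. x k * x k \<partial>sphere_unif P))"
    unfolding inprod_def by (rule Bochner_Integration.integral_sum) (auto intro: int)
  also have "\<dots> = P * s" by (simp add: sk)
  finally show ?thesis unfolding s_def[symmetric] using P by (simp add: field_simps)
qed

lemma sphere_m2:
  assumes P: "0 < P"
  shows "(\<integral>x. (inprod P x v)\<^sup>2 \<partial>sphere_unif P) = (enorm P v)\<^sup>2 / P"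
  using sphere_pow[OF P, of v 2] sphere_s[OF P] by simp



lemma bnd_pow4_sum: "\<bar>p::real\<bar> \<le> 1 \<Longrightarrow> \<bar>q\<bar> \<le> 1 \<Longrightarrow> \<bar>(p + q) ^ 4\<bar> \<le> 16"
proof -
  assume "\<bar>p\<bar> \<le> 1" "\<bar>q\<bar> \<le> 1"
  then have "\<bar>p + q\<bar> \<le> 2" by linarith
  then have "\<bar>p + q\<bar> ^ 4 \<le> 2 ^ 4" by (rule power_mono) simp
  then show ?thesis by (simp add: power_abs)
qed

lemma bnd_pow4_diff: "\<bar>p::real\<bar> \<le> 1 \<Longrightarrow> \<bar>q\<bar> \<le> 1 \<Longrightarrow> \<bar>(p - q) ^ 4\<bar> \<le> 16"
  using bnd_pow4_sum[of p "-q"] by simp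

lemma bnd_prod22: "\<bar>p::real\<bar> \<le> 1 \<Longrightarrow> \<bar>q\<bar> \<le> 1 \<Longrightarrow> \<bar>p\<^sup>2 * q\<^sup>2\<bar> \<le> 1"
  by (simp add: abs_mult power_abs abs_square_le_1 mult_le_one)

lemma bnd_pow4: "\<bar>p::real\<bar> \<le> 1 \<Longrightarrow> \<bar>p ^ 4\<bar> \<le> 1"
proof -
  assume "\<bar>p\<bar> \<le> 1"
  then have "\<bar>p\<bar> ^ 4 \<le> 1" by (intro power_le_one) simp_all
  then show ?thesis by (simp add: power_abs)
qed

lemma bnd_pow4': "\<bar>p::real\<bar> \<le> 1 \<Longrightarrow> p ^ 4 \<le> 1"
  using bnd_pow4[of p] by (meson abs_ge_self order_trans)

lemma bnd_pow4_sum': "\<bar>p::real\<bar> \<le> 1 \<Longrightarrow> \<bar>q\<bar> \<le> 1 \<Longrightarrow> (p + q) ^ 4 \<le> 16"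
  using bnd_pow4_sum[of p q] by (meson abs_ge_self order_trans)

lemma bnd_pow4_diff': "\<bar>p::real\<bar> \<le> 1 \<Longrightarrow> \<bar>q\<bar> \<le> 1 \<Longrightarrow> (p - q) ^ 4 \<le> 16"
  using bnd_pow4_diff[of p q] by (meson abs_ge_self order_trans)

lemma bnd_prod22': "\<bar>p::real\<bar> \<le> 1 \<Longrightarrow> \<bar>q\<bar> \<le> 1 \<Longrightarrow> p\<^sup>2 * q\<^sup>2 \<le> 1"
  using bnd_prod22[of p q] by (meson abs_ge_self order_trans)

lemma sphere_a_cross:
  assumes P: "0 < P" and k: "k < P" and j: "j < P" and kj: "k \<noteq> j"
  shows "(\<integral>x. (x k)\<^sup>2 * (x j)\<^sup>2 \<partial>sphere_unif P) = (\<integral>x. (x 0) ^ 4 \<partial>sphere_unif P) / 3"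
proof -
  define a where "a = (\<integral>x. (x 0) ^ 4 \<partial>sphere_unif P)"
  have ak: "(\<integral>x. (x i) ^ 4 \<partial>sphere_unif P) = a" if i: "i < P" for i
    using sphere_pow[OF P, of "ev i" 4] unfolding a_def by (simp add: inprod_ev[OF i] enorm_ev[OF i])
  define u where "u = (\<lambda>i. ev k i + ev j i)"
  define w where "w = (\<lambda>i. ev k i - ev j i)"
  have ipu: "inprod P x u = x k + x j" for x unfolding u_def by (simp add: inprod_add2 inprod_ev k j)
  have ipw: "inprod P x w = x k - x j" for x unfolding w_def by (simp add: inprod_diff2 inprod_ev k j)
  have eu: "(enorm P u) ^ 4 = 4"
  proof -
    have "(enorm P u)\<^sup>2 = 2" unfolding enorm_sq ipu using kj by (simp add: u_def ev_def)
    then have "(enorm P u) ^ 4 = 2\<^sup>2" by (metis power_mult numeral_times_numeral semiring_norm(12) num_double mult_2 power2_eq_square)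
    then show ?thesis by simp
  qed
  have ew: "(enorm P w) ^ 4 = 4"
  proof -
    have "(enorm P w)\<^sup>2 = 2" unfolding enorm_sq ipw using kj by (simp add: w_def ev_def)
    then have "(enorm P w) ^ 4 = 2\<^sup>2" by (metis power_mult numeral_times_numeral semiring_norm(12) num_double mult_2 power2_eq_square)
    then show ?thesis by simp
  qed
  have I1: "(\<integral>x. (x k + x j) ^ 4 \<partial>sphere_unif P) = 4 * a"
    using sphere_pow[OF P, of u 4] unfolding a_def ipu eu .
  have I2: "(\<integral>x. (x k - x j) ^ 4 \<partial>sphere_unif P) = 4 * a"
    using sphere_pow[OF P, of w 4] unfolding a_def ipw ew .
  have mk[measurable]: "(\<lambda>x. x k) \<in> borel_measurable (euclR P)" by (rule compE[OF k])
  have mj[measurable]: "(\<lambda>x. x j) \<in> borel_measurable (euclR P)" by (rule compE[OF j])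
  have i1: "integrable (sphere_unif P) (\<lambda>x. (x k + x j) ^ 4)"
    by (rule sphere_integrable[OF P, where B=16]) (use k j in \<open>auto intro!: bnd_pow4_sum bnd_pow4_sum'\<close>)
  have i2: "integrable (sphere_unif P) (\<lambda>x. (x k - x j) ^ 4)"
    by (rule sphere_integrable[OF P, where B=16]) (use k j in \<open>auto intro!: bnd_pow4_diff bnd_pow4_diff'\<close>)
  have i3: "integrable (sphere_unif P) (\<lambda>x. (x k) ^ 4)"
    by (rule sphere_integrable[OF P, where B=1]) (use k j in \<open>auto intro!: bnd_pow4 bnd_pow4'\<close>)
  have i4: "integrable (sphere_unif P) (\<lambda>x. (x j) ^ 4)"
    by (rule sphere_integrable[OF P, where B=1]) (use k j in \<open>auto intro!: bnd_pow4 bnd_pow4'\<close>)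
  have i5: "integrable (sphere_unif P) (\<lambda>x. (x k)\<^sup>2 * (x j)\<^sup>2)"
    by (rule sphere_integrable[OF P, where B=1]) (use k j in \<open>auto intro!: bnd_prod22 bnd_prod22'\<close>)
  have id: "(x k + x j) ^ 4 + (x k - x j) ^ 4 = 2 * (x k) ^ 4 + 12 * ((x k)\<^sup>2 * (x j)\<^sup>2) + 2 * (x j) ^ 4" for x :: "nat \<Rightarrow> real"
    by (simp add: power2_eq_square power4_eq_xxxx algebra_simps)
  have "8 * a = (\<integral>x. (x k + x j) ^ 4 + (x k - x j) ^ 4 \<partial>sphere_unif P)"
    using I1 I2 i1 i2 by simp
  also have "\<dots> = (\<integral>x. 2 * (x k) ^ 4 + 12 * ((x k)\<^sup>2 * (x j)\<^sup>2) + 2 * (x j) ^ 4 \<partial>sphere_unif P)"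
    by (simp only: id)
  also have "\<dots> = 2 * a + 12 * (\<integral>x. (x k)\<^sup>2 * (x j)\<^sup>2 \<partial>sphere_unif P) + 2 * a"
    using i3 i4 i5 ak[OF k] ak[OF j] by simp
  finally show ?thesis unfolding a_def[symmetric] by simp
qed



lemma sphere_a:
  assumes P: "0 < P"
  shows "(\<integral>x. (x 0) ^ 4 \<partial>sphere_unif P) = 3 / (P * (P + 2))"
proof -
  interpret S: prob_space "sphere_unif P" by (rule sphere_prob[OF P])
  define a where "a = (\<integral>x. (x 0) ^ 4 \<partial>sphere_unif P)"
  have ak: "(\<integral>x. (x i) ^ 4 \<partial>sphere_unif P) = a" if i: "i < P" for i
    using sphere_pow[OF P, of "ev i" 4] unfolding a_def by (simp add: inprod_ev[OF i] enorm_ev[OF i])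
  have ckj: "(\<integral>x. (x k)\<^sup>2 * (x j)\<^sup>2 \<partial>sphere_unif P) = (if j = k then a else a / 3)"
    if k: "k < P" and j: "j < P" for k j
  proof (cases "j = k")
    case True
    have "(\<integral>x. (x k)\<^sup>2 * (x j)\<^sup>2 \<partial>sphere_unif P) = (\<integral>x. (x k) ^ 4 \<partial>sphere_unif P)"
      using True by (simp add: power2_eq_square power4_eq_xxxx mult.assoc)
    then show ?thesis using True ak[OF k] by simp
  next
    case False
    then show ?thesis using sphere_a_cross[OF P k j] False unfolding a_def by simp
  qed
  have int: "integrable (sphere_unif P) (\<lambda>x. (x k)\<^sup>2 * (x j)\<^sup>2)" if k: "k < P" and j: "j < P" for k j
    by (rule sphere_integrable[OF P, where B=1]) (use k j compE in \<open>auto intro!: bnd_prod22 bnd_prod22'\<close>)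
  have int2: "integrable (sphere_unif P) (\<lambda>x. \<Sum>j<P. (x k)\<^sup>2 * (x j)\<^sup>2)" if k: "k < P" for k
    by (rule Bochner_Integration.integrable_sum) (use int k in auto)
  have sq: "(inprod P x x)\<^sup>2 = (\<Sum>k<P. \<Sum>j<P. (x k)\<^sup>2 * (x j)\<^sup>2)" for x
    unfolding inprod_def power2_eq_square[of "sum _ _"] sum_product
    by (simp add: power2_eq_square)
  have "1 = (\<integral>x. (inprod P x x)\<^sup>2 \<partial>sphere_unif P)"
  proof -
    have "(\<integral>x. (inprod P x x)\<^sup>2 \<partial>sphere_unif P) = (\<integral>x. 1 \<partial>sphere_unif P)"
      by (rule integral_cong_AE) (use AE_sphere[OF P] meas_sphere[OF inprod_self_meas] in auto)
    then show ?thesis using S.prob_space by simp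
  qed
  also have "\<dots> = (\<Sum>k<P. \<Sum>j<P. (\<integral>x. (x k)\<^sup>2 * (x j)\<^sup>2 \<partial>sphere_unif P))"
    unfolding sq
    apply (subst Bochner_Integration.integral_sum)
     apply (simp add: int2)
    apply (rule sum.cong, simp)
    apply (subst Bochner_Integration.integral_sum)
     apply (simp add: int)
    apply simp
    done
  also have "\<dots> = (\<Sum>k<P. \<Sum>j<P. (if j = k then a else a / 3))"
    by (simp add: ckj)
  also have "\<dots> = (\<Sum>k<P. a + (P - 1) * (a / 3))"
  proof (rule sum.cong)
    fix k assume k: "k \<in> {..<P}"
    have "(\<Sum>j<P. (if j = k then a else a / 3)) = a + (\<Sum>j\<in>{..<P} - {k}. a / 3)"
      using k by (subst sum.remove[of _ k]) auto
    also have "\<dots> = a + (P - 1) * (a / 3)" using k by simp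
    finally show "(\<Sum>j<P. (if j = k then a else a / 3)) = a + (P - 1) * (a / 3)" .
  qed simp
  also have "\<dots> = a * P * (P + 2) / 3"
    using P by (simp add: of_nat_diff field_simps)
  finally have "a * P * (P + 2) = 3" by simp
  moreover have "real P * (real P + 2) > 0" using P by simp
  ultimately have "a = 3 / (real P * (real P + 2))" by (simp add: field_simps)
  then show ?thesis unfolding a_def[symmetric] by simp
qed

lemma sphere_m4:
  assumes P: "0 < P"
  shows "(\<integral>x. (inprod P x v) ^ 4 \<partial>sphere_unif P) = (enorm P v) ^ 4 * (3 / (P * (P + 2)))"
  using sphere_pow[OF P, of v 4] sphere_a[OF P] by simp



lemma (in prob_space) indep_pow_int:
  fixes X Y :: "'a \<Rightarrow> real"
  assumes ind: "indep_var borel X borel Y"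
    and bX: "AE \<omega> in M. \<bar>X \<omega>\<bar> \<le> B1" and bY: "AE \<omega> in M. \<bar>Y \<omega>\<bar> \<le> B2"
  shows "expectation (\<lambda>\<omega>. X \<omega> ^ j * Y \<omega> ^ k) = expectation (\<lambda>\<omega>. X \<omega> ^ j) * expectation (\<lambda>\<omega>. Y \<omega> ^ k)"
    and "integrable M (\<lambda>\<omega>. X \<omega> ^ j)"
    and "integrable M (\<lambda>\<omega>. X \<omega> ^ j * Y \<omega> ^ k)"
proof -
  have rX[measurable]: "X \<in> borel_measurable M" using ind by (rule indep_var_rv1)
  have rY[measurable]: "Y \<in> borel_measurable M" using ind by (rule indep_var_rv2)
  have ind': "indep_var borel ((\<lambda>t. t ^ j) \<circ> X) borel ((\<lambda>t. t ^ k) \<circ> Y)"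
    by (rule indep_var_compose[OF ind]) simp_all
  have iX: "integrable M (\<lambda>\<omega>. X \<omega> ^ j)"
  proof (rule integrable_const_bound[where B="\<bar>B1\<bar> ^ j"])
    show "AE \<omega> in M. norm (X \<omega> ^ j) \<le> \<bar>B1\<bar> ^ j"
      using bX by eventually_elim (auto simp: power_abs intro!: power_mono)
  qed simp
  have iY: "integrable M (\<lambda>\<omega>. Y \<omega> ^ k)"
  proof (rule integrable_const_bound[where B="\<bar>B2\<bar> ^ k"])
    show "AE \<omega> in M. norm (Y \<omega> ^ k) \<le> \<bar>B2\<bar> ^ k"
      using bY by eventually_elim (auto simp: power_abs intro!: power_mono)
  qed simp
  show "expectation (\<lambda>\<omega>. X \<omega> ^ j * Y \<omega> ^ k) = expectation (\<lambda>\<omega>. X \<omega> ^ j) * expectation (\<lambda>\<omega>. Y \<omega> ^ k)"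
    using indep_var_lebesgue_integral[OF ind' _ _] iX iY by (simp add: comp_def)
  show "integrable M (\<lambda>\<omega>. X \<omega> ^ j)" by (rule iX)
  show "integrable M (\<lambda>\<omega>. X \<omega> ^ j * Y \<omega> ^ k)"
  proof (rule integrable_const_bound[where B="\<bar>B1\<bar> ^ j * \<bar>B2\<bar> ^ k"])
    show "AE \<omega> in M. norm (X \<omega> ^ j * Y \<omega> ^ k) \<le> \<bar>B1\<bar> ^ j * \<bar>B2\<bar> ^ k"
      using bX bY by eventually_elim (auto simp: power_abs abs_mult intro!: power_mono mult_mono)
  qed simp
qed

lemma (in prob_space) indep_sum24:
  fixes X Y :: "'a \<Rightarrow> real"
  assumes ind: "indep_var borel X borel Y"
    and bX: "AE \<omega> in M. \<bar>X \<omega>\<bar> \<le> B1" and bY: "AE \<omega> in M. \<bar>Y \<omega>\<bar> \<le> B2"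
    and EY: "expectation Y = 0" and EY3: "expectation (\<lambda>\<omega>. Y \<omega> ^ 3) = 0"
  shows "expectation (\<lambda>\<omega>. (X \<omega> + Y \<omega>)\<^sup>2) = expectation (\<lambda>\<omega>. (X \<omega>)\<^sup>2) + expectation (\<lambda>\<omega>. (Y \<omega>)\<^sup>2)"
    and "expectation (\<lambda>\<omega>. (X \<omega> + Y \<omega>) ^ 4) = expectation (\<lambda>\<omega>. X \<omega> ^ 4)
          + 6 * expectation (\<lambda>\<omega>. (X \<omega>)\<^sup>2) * expectation (\<lambda>\<omega>. (Y \<omega>)\<^sup>2) + expectation (\<lambda>\<omega>. Y \<omega> ^ 4)"
proof -
  note E = indep_pow_int(1)[OF ind bX bY] and I = indep_pow_int(3)[OF ind bX bY]
  have e2: "(X \<omega> + Y \<omega>)\<^sup>2 = X \<omega> ^ 2 * Y \<omega> ^ 0 + 2 * (X \<omega> ^ 1 * Y \<omega> ^ 1) + X \<omega> ^ 0 * Y \<omega> ^ 2" for \<omega>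
    by (simp add: power2_eq_square algebra_simps)
  have e4: "(X \<omega> + Y \<omega>) ^ 4 = X \<omega> ^ 4 * Y \<omega> ^ 0 + 4 * (X \<omega> ^ 3 * Y \<omega> ^ 1) + 6 * (X \<omega> ^ 2 * Y \<omega> ^ 2)
      + 4 * (X \<omega> ^ 1 * Y \<omega> ^ 3) + X \<omega> ^ 0 * Y \<omega> ^ 4" for \<omega>
    by (simp add: power2_eq_square power3_eq_cube power4_eq_xxxx algebra_simps)
  show "expectation (\<lambda>\<omega>. (X \<omega> + Y \<omega>)\<^sup>2) = expectation (\<lambda>\<omega>. (X \<omega>)\<^sup>2) + expectation (\<lambda>\<omega>. (Y \<omega>)\<^sup>2)"
    unfolding e2 using I[of 2 0] I[of 1 1] I[of 0 2] E[of 1 1] EY by simp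
  show "expectation (\<lambda>\<omega>. (X \<omega> + Y \<omega>) ^ 4) = expectation (\<lambda>\<omega>. X \<omega> ^ 4)
          + 6 * expectation (\<lambda>\<omega>. (X \<omega>)\<^sup>2) * expectation (\<lambda>\<omega>. (Y \<omega>)\<^sup>2) + expectation (\<lambda>\<omega>. Y \<omega> ^ 4)"
    unfolding e4 using I[of 4 0] I[of 3 1] I[of 2 2] I[of 1 3] I[of 0 4] E[of 3 1] E[of 2 2] E[of 1 3] EY EY3 by simp
qed



locale sph = prob_space M for M :: "'a measure" +
  fixes P n :: nat and U :: "nat \<Rightarrow> 'a \<Rightarrow> nat \<Rightarrow> real"
  assumes P: "0 < P" and indep: "indep_vars (\<lambda>_. euclR P) U {1..n}"
    and unif: "\<And>i. i \<in> {1..n} \<Longrightarrow> distr M (euclR P) (U i) = sphere_unif P"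
begin

lemma Um[measurable]: "i \<in> {1..n} \<Longrightarrow> U i \<in> measurable M (euclR P)"
  using indep unfolding indep_vars_def by auto

lemma U_int:
  assumes i: "i \<in> {1..n}" and g: "g \<in> borel_measurable (euclR P)"
  shows "expectation (\<lambda>\<omega>. g (U i \<omega>)) = (\<integral>x. (g x :: real) \<partial>sphere_unif P)"
  using integral_distr[OF Um[OF i] g] unif[OF i] by simp

lemma U_AE:
  assumes i: "i \<in> {1..n}"
  shows "AE \<omega> in M. (\<forall>k<P. \<bar>U i \<omega> k\<bar> \<le> 1) \<and> enorm P (U i \<omega>) \<le> 1"
proof -
  have "AE x in distr M (euclR P) (U i). (\<forall>k<P. \<bar>x k\<bar> \<le> 1) \<and> enorm P x \<le> 1"
    unfolding unif[OF i]
    using AE_sphere_coord[OF P] AE_sphere[OF P] by eventually_elim (simp add: enorm_le1)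
  then show ?thesis
    by (subst (asm) AE_distr_iff[OF Um[OF i]]) (use compE enorm_meas in measurable)
qed

lemma inprod_bound: "(\<forall>k<P. \<bar>x k\<bar> \<le> 1) \<Longrightarrow> \<bar>inprod P x v\<bar> \<le> (\<Sum>k<P. \<bar>v k\<bar>)"
proof -
  assume x: "\<forall>k<P. \<bar>x k\<bar> \<le> 1"
  have "\<bar>inprod P x v\<bar> \<le> (\<Sum>k<P. \<bar>x k * v k\<bar>)" unfolding inprod_def by (rule sum_abs)
  also have "\<dots> \<le> (\<Sum>k<P. \<bar>v k\<bar>)"
  proof (rule sum_mono)
    fix k assume "k \<in> {..<P}"
    then have "\<bar>x k\<bar> \<le> 1" using x by simp
    then show "\<bar>x k * v k\<bar> \<le> \<bar>v k\<bar>" by (simp add: abs_mult mult_left_le_one_le)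
  qed
  finally show ?thesis .
qed

definition bb :: "nat \<Rightarrow> (nat \<Rightarrow> real) \<Rightarrow> 'a \<Rightarrow> real" where
  "bb i v \<omega> = inprod P (U i \<omega>) v"

definition TT :: "nat \<Rightarrow> (nat \<Rightarrow> real) \<Rightarrow> 'a \<Rightarrow> real" where
  "TT m v \<omega> = (\<Sum>i\<in>{1..m}. bb i v \<omega>)"

lemma bb_meas[measurable]: "i \<in> {1..n} \<Longrightarrow> bb i v \<in> borel_measurable M"
  unfolding bb_def using measurable_compose[OF Um inprod_const_meas] by (simp add: comp_def)

lemma bb_AE: "i \<in> {1..n} \<Longrightarrow> AE \<omega> in M. \<bar>bb i v \<omega>\<bar> \<le> (\<Sum>k<P. \<bar>v k\<bar>)"
  using U_AE by (rule eventually_mono) (auto simp: bb_def intro: inprod_bound)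

lemma bb_mom:
  assumes i: "i \<in> {1..n}"
  shows "expectation (bb i v) = 0"
    "expectation (\<lambda>\<omega>. (bb i v \<omega>)\<^sup>2) = (enorm P v)\<^sup>2 / P"
    "expectation (\<lambda>\<omega>. (bb i v \<omega>) ^ 3) = 0"
    "expectation (\<lambda>\<omega>. (bb i v \<omega>) ^ 4) = (enorm P v) ^ 4 * (3 / (P * (P + 2)))"
proof -
  have m: "(\<lambda>x. inprod P x v) \<in> borel_measurable (euclR P)" by simp
  show "expectation (bb i v) = 0"
    using U_int[OF i m] sphere_m1[OF P] by (simp add: bb_def[abs_def])
  show "expectation (\<lambda>\<omega>. (bb i v \<omega>)\<^sup>2) = (enorm P v)\<^sup>2 / P"
    using U_int[OF i, of "\<lambda>x. (inprod P x v)\<^sup>2"] sphere_m2[OF P] by (simp add: bb_def)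
  show "expectation (\<lambda>\<omega>. (bb i v \<omega>) ^ 3) = 0"
    using U_int[OF i, of "\<lambda>x. (inprod P x v) ^ 3"] sphere_m3[OF P] by (simp add: bb_def)
  show "expectation (\<lambda>\<omega>. (bb i v \<omega>) ^ 4) = (enorm P v) ^ 4 * (3 / (P * (P + 2)))"
    using U_int[OF i, of "\<lambda>x. (inprod P x v) ^ 4"] sphere_m4[OF P, of v] by (simp add: bb_def algebra_simps)
qed

end



context sph
begin

lemma indep_TT:
  assumes m: "Suc m \<in> {1..n}"
  shows "indep_var borel (TT m v) borel (bb (Suc m) v)"
proof -
  have ir: "indep_var (PiM {1..m} (\<lambda>_. euclR P)) (\<lambda>\<omega>. restrict (\<lambda>i. U i \<omega>) {1..m})
       (PiM {Suc m} (\<lambda>_. euclR P)) (\<lambda>\<omega>. restrict (\<lambda>i. U i \<omega>) {Suc m})"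
    by (rule indep_var_restrict[OF indep]) (use m in auto)
  define Y1 where "Y1 y = (\<Sum>i\<in>{1..m}. inprod P (y i) v)" for y :: "nat \<Rightarrow> nat \<Rightarrow> real"
  define Y2 where "Y2 y = inprod P (y (Suc m)) v" for y :: "nat \<Rightarrow> nat \<Rightarrow> real"
  have cm: "(\<lambda>y. inprod P (y i) v) \<in> borel_measurable (PiM I (\<lambda>_. euclR P))" if "i \<in> I" for i I
    using measurable_compose[OF measurable_component_singleton[of i I "\<lambda>_. euclR P"] inprod_const_meas] that
    by simp
  have Y1m: "Y1 \<in> borel_measurable (PiM {1..m} (\<lambda>_. euclR P))"
    unfolding Y1_def[abs_def] by (rule borel_measurable_sum) (rule cm, simp)
  have Y2m: "Y2 \<in> borel_measurable (PiM {Suc m} (\<lambda>_. euclR P))"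
    unfolding Y2_def[abs_def] by (rule cm) simp
  have "indep_var borel (Y1 \<circ> (\<lambda>\<omega>. restrict (\<lambda>i. U i \<omega>) {1..m})) borel (Y2 \<circ> (\<lambda>\<omega>. restrict (\<lambda>i. U i \<omega>) {Suc m}))"
    by (rule indep_var_compose[OF ir Y1m Y2m])
  moreover have "Y1 \<circ> (\<lambda>\<omega>. restrict (\<lambda>i. U i \<omega>) {1..m}) = TT m v"
    by (rule ext) (simp add: Y1_def TT_def bb_def)
  moreover have "Y2 \<circ> (\<lambda>\<omega>. restrict (\<lambda>i. U i \<omega>) {Suc m}) = bb (Suc m) v"
    by (rule ext) (simp add: Y2_def bb_def)
  ultimately show ?thesis by simp
qed

lemma TT_meas[measurable]: "m \<le> n \<Longrightarrow> TT m v \<in> borel_measurable M"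
  unfolding TT_def[abs_def] by (rule borel_measurable_sum) simp

lemma TT_AE:
  assumes m: "m \<le> n"
  shows "AE \<omega> in M. \<bar>TT m v \<omega>\<bar> \<le> m * (\<Sum>k<P. \<bar>v k\<bar>)"
proof -
  have "AE \<omega> in M. \<forall>i\<in>{1..m}. \<bar>bb i v \<omega>\<bar> \<le> (\<Sum>k<P. \<bar>v k\<bar>)"
    using m by (subst AE_finite_all) (auto intro!: bb_AE)
  then show ?thesis
  proof eventually_elim
    case (elim \<omega>)
    have "\<bar>TT m v \<omega>\<bar> \<le> (\<Sum>i\<in>{1..m}. \<bar>bb i v \<omega>\<bar>)" unfolding TT_def by (rule sum_abs)
    also have "\<dots> \<le> (\<Sum>i\<in>{1..m}. (\<Sum>k<P. \<bar>v k\<bar>))" by (rule sum_mono) (use elim in auto)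
    also have "\<dots> = m * (\<Sum>k<P. \<bar>v k\<bar>)" by simp
    finally show ?case .
  qed
qed

end



context sph
begin

lemma TT_mom:
  assumes m: "m \<le> n"
  shows "expectation (\<lambda>\<omega>. (TT m v \<omega>)\<^sup>2) = m * (enorm P v)\<^sup>2 / P \<and>
         expectation (\<lambda>\<omega>. (TT m v \<omega>) ^ 4) \<le> 3 * (real m)\<^sup>2 * (enorm P v) ^ 4 / (real P)\<^sup>2"
  using m
proof (induction m)
  case 0
  then show ?case by (simp add: TT_def)
next
  case (Suc m)
  have mi: "Suc m \<in> {1..n}" using Suc.prems by simp
  have IH: "expectation (\<lambda>\<omega>. (TT m v \<omega>)\<^sup>2) = m * (enorm P v)\<^sup>2 / P"
    "expectation (\<lambda>\<omega>. (TT m v \<omega>) ^ 4) \<le> 3 * (real m)\<^sup>2 * (enorm P v) ^ 4 / (real P)\<^sup>2"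
    using Suc by auto
  have eqT: "TT (Suc m) v \<omega> = TT m v \<omega> + bb (Suc m) v \<omega>" for \<omega>
    unfolding TT_def by simp
  note S = indep_sum24[OF indep_TT[OF mi] TT_AE[of m v] bb_AE[OF mi] bb_mom(1)[OF mi] bb_mom(3)[OF mi]]
  define e where "e = enorm P v"
  have e0: "0 \<le> e" unfolding e_def by (rule enorm_nonneg)
  have Pp: "(0::real) < P" using P by simp
  have s2: "expectation (\<lambda>\<omega>. (TT (Suc m) v \<omega>)\<^sup>2) = Suc m * (enorm P v)\<^sup>2 / P"
    unfolding eqT using Suc.prems S(1) IH(1) bb_mom(2)[OF mi]
    by (simp add: add_divide_distrib algebra_simps)
  have q: "e ^ 4 * (3 / (real P * (real P + 2))) \<le> 3 * e ^ 4 / (real P)\<^sup>2"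
  proof -
    have h: "3 / (real P * (real P + 2)) \<le> 3 / (real P)\<^sup>2"
      using Pp by (intro divide_left_mono) (auto simp: power2_eq_square)
    have "e ^ 4 * (3 / (real P * (real P + 2))) \<le> e ^ 4 * (3 / (real P)\<^sup>2)"
      by (rule mult_left_mono[OF h]) (simp add: e0)
    also have "\<dots> = 3 * e ^ 4 / (real P)\<^sup>2" by simp
    finally show ?thesis .
  qed
  have "expectation (\<lambda>\<omega>. (TT (Suc m) v \<omega>) ^ 4)
      = expectation (\<lambda>\<omega>. (TT m v \<omega>) ^ 4) + 6 * (m * e\<^sup>2 / P) * (e\<^sup>2 / P) + e ^ 4 * (3 / (real P * (real P + 2)))"
    unfolding eqT using Suc.prems S(2) IH(1) bb_mom(2)[OF mi] bb_mom(4)[OF mi] by (simp add: e_def algebra_simps)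
  also have "\<dots> \<le> 3 * (real m)\<^sup>2 * e ^ 4 / (real P)\<^sup>2 + 6 * (m * e\<^sup>2 / P) * (e\<^sup>2 / P) + 3 * e ^ 4 / (real P)\<^sup>2"
    using IH(2) q unfolding e_def by linarith
  also have "\<dots> = 3 * (real (Suc m))\<^sup>2 * e ^ 4 / (real P)\<^sup>2"
    using Pp by (simp add: field_simps power2_eq_square power4_eq_xxxx)
  finally show ?case using s2 by (simp add: e_def)
qed

end



lemma (in prob_space) indep_fubini:
  assumes ind: "indep_var S X T Y" and G[measurable]: "G \<in> borel_measurable (S \<Otimes>\<^sub>M T)"
  shows "(\<integral>\<^sup>+ \<omega>. G (X \<omega>, Y \<omega>) \<partial>M) = (\<integral>\<^sup>+ \<omega>'. (\<integral>\<^sup>+ \<omega>. G (X \<omega>, Y \<omega>') \<partial>M) \<partial>M)"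
proof -
  have rX[measurable]: "X \<in> measurable M S" and rY[measurable]: "Y \<in> measurable M T"
    and eq: "distr M S X \<Otimes>\<^sub>M distr M T Y = distr M (S \<Otimes>\<^sub>M T) (\<lambda>x. (X x, Y x))"
    using ind[unfolded indep_var_distribution_eq] by auto
  interpret DX: prob_space "distr M S X" by (rule prob_space_distr[OF rX])
  interpret DY: prob_space "distr M T Y" by (rule prob_space_distr[OF rY])
  interpret DXY: pair_sigma_finite "distr M S X" "distr M T Y" ..
  have G': "G \<in> borel_measurable (distr M S X \<Otimes>\<^sub>M distr M T Y)"
    using G by (simp add: measurable_cong_sets[OF sets_pair_measure_cong[OF sets_distr sets_distr] refl])
  have "(\<integral>\<^sup>+ \<omega>. G (X \<omega>, Y \<omega>) \<partial>M) = (\<integral>\<^sup>+ z. G z \<partial>distr M (S \<Otimes>\<^sub>M T) (\<lambda>x. (X x, Y x)))"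
    by (subst nn_integral_distr) simp_all
  also have "\<dots> = (\<integral>\<^sup>+ z. G z \<partial>(distr M S X \<Otimes>\<^sub>M distr M T Y))" by (simp add: eq)
  also have "\<dots> = (\<integral>\<^sup>+ y. (\<integral>\<^sup>+ x. G (x, y) \<partial>distr M S X) \<partial>distr M T Y)"
    by (rule DXY.nn_integral_snd[symmetric, OF G'])
  also have "\<dots> = (\<integral>\<^sup>+ \<omega>'. (\<integral>\<^sup>+ x. G (x, Y \<omega>') \<partial>distr M S X) \<partial>M)"
  proof -
    have st: "sets (T \<Otimes>\<^sub>M distr M S X) = sets (T \<Otimes>\<^sub>M S)" by (rule sets_pair_measure_cong) simp_all
    have "(\<lambda>z. G (snd z, fst z)) \<in> borel_measurable (T \<Otimes>\<^sub>M S)" by measurable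
    then have Gs: "(\<lambda>z. G (snd z, fst z)) \<in> borel_measurable (T \<Otimes>\<^sub>M distr M S X)"
      using measurable_cong_sets[OF st refl] by simp
    have Fm: "(\<lambda>y. \<integral>\<^sup>+ x. G (x, y) \<partial>distr M S X) \<in> borel_measurable T"
      using DX.borel_measurable_nn_integral_fst[OF Gs] by simp
    have Fm': "(\<lambda>y. \<integral>\<^sup>+ x. G (x, y) \<partial>distr M S X) \<in> borel_measurable (distr M T Y)"
      using measurable_cong_sets[OF sets_distr[of M T Y] refl, of borel] Fm by simp
    show ?thesis by (rule nn_integral_distr[OF rY Fm'])
  qed
  also have "\<dots> = (\<integral>\<^sup>+ \<omega>'. (\<integral>\<^sup>+ \<omega>. G (X \<omega>, Y \<omega>') \<partial>M) \<partial>M)"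
  proof (rule nn_integral_cong)
    fix \<omega>' assume "\<omega>' \<in> space M"
    then have y: "Y \<omega>' \<in> space T" using measurable_space[OF rY] by blast
    show "(\<integral>\<^sup>+ x. G (x, Y \<omega>') \<partial>distr M S X) = (\<integral>\<^sup>+ \<omega>. G (X \<omega>, Y \<omega>') \<partial>M)"
      by (rule nn_integral_distr[OF rX]) (use y in measurable)
  qed
  finally show ?thesis .
qed



context sph
begin

lemma U_AE_all: "AE \<omega> in M. \<forall>i\<in>{1..n}. (\<forall>k<P. \<bar>U i \<omega> k\<bar> \<le> 1) \<and> enorm P (U i \<omega>) \<le> 1"
  apply (subst AE_finite_all)
   apply simp
  using U_AE by blast

lemma inprod_bound2: "(\<forall>k<P. \<bar>x k\<bar> \<le> 1) \<Longrightarrow> (\<forall>k<P. \<bar>y k\<bar> \<le> 1) \<Longrightarrow> \<bar>inprod P x y\<bar> \<le> P"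
proof -
  assume x: "\<forall>k<P. \<bar>x k\<bar> \<le> 1" and y: "\<forall>k<P. \<bar>y k\<bar> \<le> 1"
  have "\<bar>inprod P x y\<bar> \<le> (\<Sum>k<P. \<bar>y k\<bar>)" by (rule inprod_bound[OF x])
  also have "\<dots> \<le> (\<Sum>k<P. 1)" by (rule sum_mono) (use y in auto)
  finally show ?thesis by simp
qed

definition SS :: "nat \<Rightarrow> 'a \<Rightarrow> real" where
  "SS l \<omega> = (\<Sum>i=1..<l. inprod P (U i \<omega>) (U l \<omega>))"

lemma SS_meas[measurable]: "l \<in> {1..n} \<Longrightarrow> SS l \<in> borel_measurable M"
  unfolding SS_def[abs_def] by (rule borel_measurable_sum) (rule inprod_meas; auto)

lemma SS_AE: "l \<in> {1..n} \<Longrightarrow> AE \<omega> in M. \<bar>SS l \<omega>\<bar> \<le> real l * P"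
  using U_AE_all
proof eventually_elim
  case (elim \<omega>)
  assume l: "l \<in> {1..n}"
  have "\<bar>SS l \<omega>\<bar> \<le> (\<Sum>i=1..<l. \<bar>inprod P (U i \<omega>) (U l \<omega>)\<bar>)" unfolding SS_def by (rule sum_abs)
  also have "\<dots> \<le> (\<Sum>i=1..<l. real P)"
    by (rule sum_mono) (use elim l in \<open>auto intro!: inprod_bound2\<close>)
  also have "\<dots> \<le> real l * P" by simp (intro mult_right_mono, auto)
  finally show ?case .
qed

lemma SS_int4: "l \<in> {1..n} \<Longrightarrow> integrable M (\<lambda>\<omega>. (SS l \<omega>) ^ 4)"
proof -
  assume l: "l \<in> {1..n}"
  show ?thesis
  proof (rule integrable_const_bound[where B="(real l * P) ^ 4"])
    show "AE \<omega> in M. norm ((SS l \<omega>) ^ 4) \<le> (real l * P) ^ 4"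
      using SS_AE[OF l]
    proof eventually_elim
      case (elim \<omega>)
      have "\<bar>SS l \<omega>\<bar> ^ 4 \<le> (real l * P) ^ 4" by (rule power_mono[OF elim abs_ge_zero])
      then show ?case by (simp add: power_abs)
    qed
  qed (use l in simp)
qed

end



context sph
begin

lemma SS_mom4:
  assumes l: "l \<in> {1..n}"
  shows "expectation (\<lambda>\<omega>. (SS l \<omega>) ^ 4) \<le> 3 * (real (l - 1))\<^sup>2 / (real P)\<^sup>2"
proof -
  define m where "m = l - 1"
  have ml: "{1..<l} = {1..m}" "m \<le> n" "m < l" using l by (auto simp: m_def)
  define B where "B = 3 * (real m)\<^sup>2 / (real P)\<^sup>2"
  have B0: "0 \<le> B" unfolding B_def by simp
  have ir: "indep_var (PiM {1..m} (\<lambda>_. euclR P)) (\<lambda>\<omega>. restrict (\<lambda>i. U i \<omega>) {1..m})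
       (PiM {l} (\<lambda>_. euclR P)) (\<lambda>\<omega>. restrict (\<lambda>i. U i \<omega>) {l})"
    by (rule indep_var_restrict[OF indep]) (use l ml in auto)
  define G where "G z = ennreal ((\<Sum>i\<in>{1..m}. inprod P (fst z i) (snd z l)) ^ 4)"
    for z :: "(nat \<Rightarrow> nat \<Rightarrow> real) \<times> (nat \<Rightarrow> nat \<Rightarrow> real)"
  have Gm: "G \<in> borel_measurable (PiM {1..m} (\<lambda>_. euclR P) \<Otimes>\<^sub>M PiM {l} (\<lambda>_. euclR P))"
  proof -
    have c1: "(\<lambda>z. fst z i) \<in> measurable (PiM {1..m} (\<lambda>_. euclR P) \<Otimes>\<^sub>M PiM {l} (\<lambda>_. euclR P)) (euclR P)"
      if "i \<in> {1..m}" for i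
      using measurable_compose[OF measurable_fst measurable_component_singleton[OF that]] by (simp add: comp_def)
    have c2: "(\<lambda>z. snd z l) \<in> measurable (PiM {1..m} (\<lambda>_. euclR P) \<Otimes>\<^sub>M PiM {l} (\<lambda>_. euclR P)) (euclR P)"
      using measurable_compose[OF measurable_snd measurable_component_singleton[of l "{l}"]] by (simp add: comp_def)
    show ?thesis unfolding G_def[abs_def]
      by (intro measurable_compose[OF _ measurable_ennreal] borel_measurable_power borel_measurable_sum
          inprod_meas c1 c2) auto
  qed
  have "(\<integral>\<^sup>+ \<omega>. ennreal ((SS l \<omega>) ^ 4) \<partial>M)
      = (\<integral>\<^sup>+ \<omega>. G (restrict (\<lambda>i. U i \<omega>) {1..m}, restrict (\<lambda>i. U i \<omega>) {l}) \<partial>M)"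
    unfolding G_def SS_def ml(1) by simp
  also have "\<dots> = (\<integral>\<^sup>+ \<omega>'. (\<integral>\<^sup>+ \<omega>. G (restrict (\<lambda>i. U i \<omega>) {1..m}, restrict (\<lambda>i. U i \<omega>') {l}) \<partial>M) \<partial>M)"
    by (rule indep_fubini[OF ir Gm])
  also have "\<dots> \<le> (\<integral>\<^sup>+ \<omega>'. ennreal B \<partial>M)"
  proof (rule nn_integral_mono_AE)
    show "AE \<omega>' in M. (\<integral>\<^sup>+ \<omega>. G (restrict (\<lambda>i. U i \<omega>) {1..m}, restrict (\<lambda>i. U i \<omega>') {l}) \<partial>M) \<le> ennreal B"
      using U_AE[OF l]
    proof eventually_elim
      case (elim \<omega>')
      define v where "v = U l \<omega>'"
      have ev: "enorm P v \<le> 1" using elim by (simp add: v_def)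
      have "(\<integral>\<^sup>+ \<omega>. G (restrict (\<lambda>i. U i \<omega>) {1..m}, restrict (\<lambda>i. U i \<omega>') {l}) \<partial>M)
          = (\<integral>\<^sup>+ \<omega>. ennreal ((TT m v \<omega>) ^ 4) \<partial>M)"
        unfolding G_def TT_def bb_def v_def by simp
      also have "\<dots> = ennreal (expectation (\<lambda>\<omega>. (TT m v \<omega>) ^ 4))"
      proof (rule nn_integral_eq_integral)
        show "integrable M (\<lambda>\<omega>. (TT m v \<omega>) ^ 4)"
          using indep_pow_int(2)[OF indep_TT[of m v] TT_AE[OF ml(2), of v] bb_AE[of "Suc m" v], of 4]
            ml l by simp
      qed simp
      also have "\<dots> \<le> ennreal B"
      proof (rule ennreal_leI)
        have "expectation (\<lambda>\<omega>. (TT m v \<omega>) ^ 4) \<le> 3 * (real m)\<^sup>2 * (enorm P v) ^ 4 / (real P)\<^sup>2"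
          using TT_mom[OF ml(2), of v] by simp
        also have "\<dots> \<le> B"
        proof -
          have "(enorm P v) ^ 4 \<le> 1" using ev enorm_nonneg[of P v] by (simp add: power_le_one)
          then show ?thesis unfolding B_def
            by (intro divide_right_mono) (auto intro: mult_left_le)
        qed
        finally show "expectation (\<lambda>\<omega>. (TT m v \<omega>) ^ 4) \<le> B" .
      qed
      finally show ?case .
    qed
  qed
  also have "\<dots> = ennreal B" using prob_space by (simp add: emeasure_space_1)
  finally have "(\<integral>\<^sup>+ \<omega>. ennreal ((SS l \<omega>) ^ 4) \<partial>M) \<le> ennreal B" .
  moreover have "(\<integral>\<^sup>+ \<omega>. ennreal ((SS l \<omega>) ^ 4) \<partial>M) = ennreal (expectation (\<lambda>\<omega>. (SS l \<omega>) ^ 4))"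
    by (rule nn_integral_eq_integral[OF SS_int4[OF l]]) simp
  ultimately have "ennreal (expectation (\<lambda>\<omega>. (SS l \<omega>) ^ 4)) \<le> ennreal B" by simp
  then show ?thesis using B0 unfolding B_def m_def by (simp add: ennreal_le_iff)
qed

end



lemma pt_bound:
  fixes D \<epsilon> :: real
  assumes e: "0 < \<epsilon>"
  shows "D\<^sup>2 * indicator {x. \<epsilon> < \<bar>x\<bar>} D \<le> D ^ 4 / \<epsilon>\<^sup>2"
proof (cases "\<epsilon> < \<bar>D\<bar>")
  case True
  then have "\<epsilon>\<^sup>2 \<le> D\<^sup>2" using e by (metis abs_ge_zero less_imp_le power2_abs power_mono)
  then have "1 \<le> D\<^sup>2 / \<epsilon>\<^sup>2" using e by simp
  then have "D\<^sup>2 * 1 \<le> D\<^sup>2 * (D\<^sup>2 / \<epsilon>\<^sup>2)" by (intro mult_left_mono) auto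
  then show ?thesis using True by (simp add: power4_eq_xxxx power2_eq_square)
next
  case False
  then show ?thesis by (simp add: indicator_def)
qed

context sph
begin

lemma term_bound:
  assumes l: "l \<in> {1..n}" and e: "0 < \<epsilon>"
  shows "expectation (\<lambda>\<omega>. let D = sqrt (2 * real P) / real n * SS l \<omega> in D\<^sup>2 * indicator {x. \<bar>x\<bar> > \<epsilon>} D)
         \<le> 12 / ((real n)\<^sup>2 * \<epsilon>\<^sup>2)"
proof -
  define c where "c = sqrt (2 * real P) / real n"
  have n: "0 < n" using l by simp
  have c4: "c ^ 4 = 4 * (real P)\<^sup>2 / (real n) ^ 4"
  proof -
    have s: "(sqrt (2 * real P))\<^sup>2 = 2 * real P" by simp
    have q0: "(x::real) ^ 4 = (x\<^sup>2)\<^sup>2" for x by (simp flip: power_mult)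
    have q: "sqrt (2 * real P) ^ 4 = ((sqrt (2 * real P))\<^sup>2)\<^sup>2" by (rule q0)
    have "sqrt (2 * real P) ^ 4 = (2 * real P)\<^sup>2" by (simp only: q s)
    also have "\<dots> = 4 * (real P)\<^sup>2" by (simp add: power2_eq_square)
    finally have "sqrt (2 * real P) ^ 4 = 4 * (real P)\<^sup>2" .
    then show ?thesis unfolding c_def by (simp add: power_divide)
  qed
  have "expectation (\<lambda>\<omega>. let D = c * SS l \<omega> in D\<^sup>2 * indicator {x. \<bar>x\<bar> > \<epsilon>} D)
      \<le> expectation (\<lambda>\<omega>. c ^ 4 * (SS l \<omega>) ^ 4 / \<epsilon>\<^sup>2)"
  proof (rule integral_mono_AE')
    show "integrable M (\<lambda>\<omega>. c ^ 4 * (SS l \<omega>) ^ 4 / \<epsilon>\<^sup>2)"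
      using SS_int4[OF l] by simp
    show "AE \<omega> in M. (let D = c * SS l \<omega> in D\<^sup>2 * indicator {x. \<bar>x\<bar> > \<epsilon>} D) \<le> c ^ 4 * (SS l \<omega>) ^ 4 / \<epsilon>\<^sup>2"
    proof (rule AE_I2)
      fix \<omega>
      show "(let D = c * SS l \<omega> in D\<^sup>2 * indicator {x. \<bar>x\<bar> > \<epsilon>} D) \<le> c ^ 4 * (SS l \<omega>) ^ 4 / \<epsilon>\<^sup>2"
        using pt_bound[OF e, of "c * SS l \<omega>"] by (simp add: Let_def power_mult_distrib)
    qed
    show "AE \<omega> in M. 0 \<le> c ^ 4 * (SS l \<omega>) ^ 4 / \<epsilon>\<^sup>2"
      by (simp add: zero_le_even_power)
  qed
  also have "\<dots> = c ^ 4 * expectation (\<lambda>\<omega>. (SS l \<omega>) ^ 4) / \<epsilon>\<^sup>2" by simp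
  also have "\<dots> \<le> c ^ 4 * (3 * (real (l - 1))\<^sup>2 / (real P)\<^sup>2) / \<epsilon>\<^sup>2"
    by (intro divide_right_mono mult_left_mono SS_mom4[OF l]) (auto simp: zero_le_even_power)
  also have "\<dots> = 12 * (real (l - 1))\<^sup>2 / ((real n) ^ 4 * \<epsilon>\<^sup>2)"
    unfolding c4 using P by (simp add: field_simps)
  also have "\<dots> \<le> 12 * (real n)\<^sup>2 / ((real n) ^ 4 * \<epsilon>\<^sup>2)"
    using l e by (intro divide_right_mono mult_left_mono power_mono) auto
  also have "\<dots> = 12 / ((real n)\<^sup>2 * \<epsilon>\<^sup>2)"
    using n by (simp add: field_simps power2_eq_square power4_eq_xxxx)
  finally show ?thesis unfolding c_def .
qed

end



theorem lemma2:
  fixes p :: "nat \<Rightarrow> nat"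
    and M :: "nat \<Rightarrow> 'a measure"
    and U :: "nat \<Rightarrow> nat \<Rightarrow> 'a \<Rightarrow> (nat \<Rightarrow> real)"
    and \<epsilon> :: real
  assumes p_pos: "\<And>n. p n > 0"
    and p_lim: "filterlim p at_top sequentially"
    and prob: "\<And>n. prob_space (M n)"
    and indep: "\<And>n. prob_space.indep_vars (M n) (\<lambda>_. euclR (p n)) (U n) {1..n}"
    and unif: "\<And>n i. i \<in> {1..n} \<Longrightarrow> distr (M n) (euclR (p n)) (U n i) = sphere_unif (p n)"
    and eps: "\<epsilon> > 0"
  shows "(\<lambda>n. \<Sum>l=1..n. LINT \<omega>|M n.
            (let D = sqrt (2 * real (p n)) / real n * (\<Sum>i=1..<l. inprod (p n) (U n i \<omega>) (U n l \<omega>))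
             in D\<^sup>2 * indicator {x. \<bar>x\<bar> > \<epsilon>} D))
         \<longlonglongrightarrow> 0"
proof -
  define F where "F n = (\<Sum>l=1..n. LINT \<omega>|M n.
            (let D = sqrt (2 * real (p n)) / real n * (\<Sum>i=1..<l. inprod (p n) (U n i \<omega>) (U n l \<omega>))
             in D\<^sup>2 * indicator {x. \<bar>x\<bar> > \<epsilon>} D))" for n
  have nonneg: "0 \<le> F n" for n
    unfolding F_def
    by (intro sum_nonneg Bochner_Integration.integral_nonneg) (auto simp: Let_def indicator_def)
  have bnd: "F n \<le> 12 / \<epsilon>\<^sup>2 / real n" if n: "1 \<le> n" for n
  proof -
    interpret S: sph "M n" "p n" n "U n"
      using prob[of n] indep[of n] unif[of _ n] p_pos[of n] by (simp add: sph_def sph_axioms_def)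
    have "F n \<le> (\<Sum>l=1..n. 12 / ((real n)\<^sup>2 * \<epsilon>\<^sup>2))"
      unfolding F_def
      by (rule sum_mono) (rule S.term_bound[OF _ eps, unfolded S.SS_def], simp)
    also have "\<dots> = 12 / \<epsilon>\<^sup>2 / real n" using n by (simp add: power2_eq_square field_simps)
    finally show ?thesis .
  qed
  have "F \<longlonglongrightarrow> 0"
  proof (rule tendsto_sandwich[of "\<lambda>_. 0" F sequentially "\<lambda>n. 12 / \<epsilon>\<^sup>2 / real n"])
    show "\<forall>\<^sub>F n in sequentially. 0 \<le> F n" by (simp add: nonneg)
    show "\<forall>\<^sub>F n in sequentially. F n \<le> 12 / \<epsilon>\<^sup>2 / real n"
      using eventually_ge_at_top[of 1] by (rule eventually_mono) (rule bnd)
    show "(\<lambda>n. 12 / \<epsilon>\<^sup>2 / real n) \<longlonglongrightarrow> 0" by (rule lim_const_over_n)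
  qed simp
  then show ?thesis unfolding F_def .
qed



end
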